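(* For a poset $P$ on $\{1,2,\ldots,n\}$ and field $k$, the following are equivalent: (i) $I^{\mathfrak{gr}}_P=I_P$ and $\mathfrak{gr}(R_P)\cong R_P$; (ii) the toric ideal $I_P=\ker(\varphi:S\to R_P)$ is homogeneous for the standard $\mathbb{N}$-grading of $S$ in which each $U_J$ has degree one; (iii) every pair $\{J_1,J_2\}$ of connected order ideals of $P$ that intersects nontrivially has $J_1\cap J_2$ connected.
   Context: All posets are finite. A weak $P$-partition is $f:\{1,\ldots,n\}\to\mathbb{N}$ with $f(i)\ge f(j)$ whenever $i<_Pj$; $R_P\subseteq k[x_1,\ldots,x_n]$ is the span of $\mathbf{x}^f=\prod_ix_i^{f(i)}$ over weak $P$-partitions; $\mathfrak{m}$ is spanned by the $\mathbf{x}^f$ with $f\ne0$; $\mathfrak{gr}(R_P)=\bigoplus_i\mathfrak{m}^i/\mathfrak{m}^{i+1}$. A connected order ideal is a nonempty downward-closed subset whose induced Hasse diagram is connected; $\mathcal{J}_{\mathrm{conn}}(P)$ is the set of these; two of them intersect nontrivially if neither disjoint nor nested; $\Pi(P)$ is the set of such pairs. $S=k[U_J]_{J\in\mathcal{J}_{\mathrm{conn}}(P)}$; $\varphi:S\to R_P$, $U_J\mapsto\prod_{j\in J}x_j$, and $\mathfrak{gr}(\varphi):S\to\mathfrak{gr}(R_P)$ sends $U_J$ to the class of $\prod_{j\in J}x_j$ in $\mathfrak{m}/\mathfrak{m}^2$. $I_P=\ker\varphi$ is generated by $U_{J_1}U_{J_2}-U_{J_1\cup J_2}U_{J^{(1)}}\cdots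 U_{J^{(t)}}$ ($\{J_1,J_2\}\in\Pi(P)$, $J^{(1)},\ldots,J^{(t)}$ the connected components of $J_1\cap J_2$), and $I^{\mathfrak{gr}}_P=\ker\mathfrak{gr}(\varphi)$ is generated by $U_{J_1}U_{J_2}-U_{J_1\cup J_2}U_{J_1\cap J_2}$ when $J_1\cap J_2$ is connected and $U_{J_1}U_{J_2}$ when disconnected, over $\{J_1,J_2\}\in\Pi(P)$. *)

theory Defs
  imports "HOL-Library.Poly_Mapping" "HOL-Algebra.QuotRing"
begin

text \<open>A poset on {1..n} is a relation R with partial_order_on {1..n} R;
  (i,j) in R means i <=_P j.\<close>

definition strict_le :: "nat rel \<Rightarrow> nat \<Rightarrow> nat \<Rightarrow> bool" where
  "strict_le R i j \<longleftrightarrow> (i, j) \<in> R \<and> i \<noteq> j"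

definition covers_in :: "nat rel \<Rightarrow> nat set \<Rightarrow> nat \<Rightarrow> nat \<Rightarrow> bool" where
  "covers_in R J i j \<longleftrightarrow> i \<in> J \<and> j \<in> J \<and> strict_le R i j \<and>
     \<not> (\<exists>k\<in>J. strict_le R i k \<and> strict_le R k j)"

definition hasse_edges :: "nat rel \<Rightarrow> nat set \<Rightarrow> nat rel" where
  "hasse_edges R J = {(i, j). covers_in R J i j \<or> covers_in R J j i}"

definition hasse_connected :: "nat rel \<Rightarrow> nat set \<Rightarrow> bool" where
  "hasse_connected R J \<longleftrightarrow> (\<forall>a\<in>J. \<forall>b\<in>J. (a, b) \<in> (hasse_edges R J)\<^sup>*)"

definition order_ideal :: "nat \<Rightarrow> nat rel \<Rightarrow> nat set \<Rightarrow> bool" where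
  "order_ideal n R J \<longleftrightarrow> J \<subseteq> {1..n} \<and> (\<forall>i j. j \<in> J \<and> (i, j) \<in> R \<longrightarrow> i \<in> J)"

definition J_conn :: "nat \<Rightarrow> nat rel \<Rightarrow> nat set set" where
  "J_conn n R = {J. J \<noteq> {} \<and> order_ideal n R J \<and> hasse_connected R J}"

definition intersect_nontrivially :: "nat set \<Rightarrow> nat set \<Rightarrow> bool" where
  "intersect_nontrivially J1 J2 \<longleftrightarrow> J1 \<inter> J2 \<noteq> {} \<and> \<not> J1 \<subseteq> J2 \<and> \<not> J2 \<subseteq> J1"

definition Pi_pairs :: "nat \<Rightarrow> nat rel \<Rightarrow> nat set set set" where
  "Pi_pairs n R = {{J1, J2} | J1 J2. J1 \<in> J_conn n R \<and> J2 \<in> J_conn n R \<and> intersect_nontrivially J1 J2}"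

type_synonym ('v, 'k) mpoly = "('v \<Rightarrow>\<^sub>0 nat) \<Rightarrow>\<^sub>0 'k"

definition pconst :: "'k::zero \<Rightarrow> ('v, 'k) mpoly" where
  "pconst c = Poly_Mapping.single 0 c"

definition pvar :: "'v \<Rightarrow> ('v, 'k::{zero,one}) mpoly" where
  "pvar v = Poly_Mapping.single (Poly_Mapping.single v 1) 1"

definition pmonom :: "('v \<Rightarrow>\<^sub>0 nat) \<Rightarrow> ('v, 'k::{zero,one}) mpoly" where
  "pmonom f = Poly_Mapping.single f 1"

definition mdeg :: "('v \<Rightarrow>\<^sub>0 nat) \<Rightarrow> nat" where
  "mdeg m = (\<Sum>v\<in>Poly_Mapping.keys m. Poly_Mapping.lookup m v)"

definition hom_comp :: "nat \<Rightarrow> ('v, 'k::comm_ring_1) mpoly \<Rightarrow> ('v, 'k) mpoly" where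
  "hom_comp d g = (\<Sum>m\<in>{m \<in> Poly_Mapping.keys g. mdeg m = d}. Poly_Mapping.single m (Poly_Mapping.lookup g m))"

definition homogeneous_ideal :: "('v, 'k::comm_ring_1) mpoly set \<Rightarrow> bool" where
  "homogeneous_ideal I \<longleftrightarrow> (\<forall>g\<in>I. \<forall>d. hom_comp d g \<in> I)"

definition peval :: "('v \<Rightarrow> ('w, 'k::comm_ring_1) mpoly) \<Rightarrow> ('v, 'k) mpoly \<Rightarrow> ('w, 'k) mpoly" where
  "peval a g = (\<Sum>m\<in>Poly_Mapping.keys g. pconst (Poly_Mapping.lookup g m) * (\<Prod>v\<in>Poly_Mapping.keys m. a v ^ Poly_Mapping.lookup m v))"

definition kspan :: "('w, 'k::comm_ring_1) mpoly set \<Rightarrow> ('w, 'k) mpoly set" where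
  "kspan X = {p. \<exists>F c. finite F \<and> F \<subseteq> X \<and> p = (\<Sum>q\<in>F. pconst (c q) * q)}"

definition set_prod :: "('w, 'k::comm_ring_1) mpoly set \<Rightarrow> ('w, 'k) mpoly set \<Rightarrow> ('w, 'k) mpoly set" where
  "set_prod A B = {sum_list (map (\<lambda>(a, b). a * b) xs) | xs. set xs \<subseteq> A \<times> B}"

definition weak_P_partition :: "nat \<Rightarrow> nat rel \<Rightarrow> (nat \<Rightarrow>\<^sub>0 nat) \<Rightarrow> bool" where
  "weak_P_partition n R f \<longleftrightarrow> Poly_Mapping.keys f \<subseteq> {1..n} \<and>
     (\<forall>i j. strict_le R i j \<longrightarrow> Poly_Mapping.lookup f i \<ge> Poly_Mapping.lookup f j)"

definition R_P :: "nat \<Rightarrow> nat rel \<Rightarrow> (nat, 'k::comm_ring_1) mpoly set" where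
  "R_P n R = kspan {pmonom f | f. weak_P_partition n R f}"

definition max_ideal :: "nat \<Rightarrow> nat rel \<Rightarrow> (nat, 'k::comm_ring_1) mpoly set" where
  "max_ideal n R = kspan {pmonom f | f. weak_P_partition n R f \<and> f \<noteq> 0}"

fun mpow :: "nat \<Rightarrow> nat rel \<Rightarrow> nat \<Rightarrow> (nat, 'k::comm_ring_1) mpoly set" where
  "mpow n R 0 = R_P n R"
| "mpow n R (Suc i) = set_prod (max_ideal n R) (mpow n R i)"

definition R_P_ring :: "nat \<Rightarrow> nat rel \<Rightarrow> (nat, 'k::comm_ring_1) mpoly ring" where
  "R_P_ring n R = \<lparr>carrier = R_P n R, monoid.mult = (*), one = 1, zero = 0, add = (+)\<rparr>"

text \<open>Elements of gr = direct sum of M i / M (Suc i): a coset in each degree, almost all zero.\<close>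
definition gcos :: "(nat \<Rightarrow> ('w, 'k::comm_ring_1) mpoly set) \<Rightarrow> nat \<Rightarrow> ('w, 'k) mpoly \<Rightarrow> ('w, 'k) mpoly set" where
  "gcos M i a = {a + b | b. b \<in> M (Suc i)}"

definition grep :: "('w, 'k::comm_ring_1) mpoly set \<Rightarrow> ('w, 'k) mpoly" where
  "grep A = (SOME a. a \<in> A)"

definition gr_ring :: "(nat \<Rightarrow> ('w, 'k::comm_ring_1) mpoly set) \<Rightarrow> (nat \<Rightarrow> ('w, 'k) mpoly set) ring" where
  "gr_ring M = \<lparr>carrier = {F. (\<forall>i. \<exists>a\<in>M i. F i = gcos M i a) \<and> finite {i. F i \<noteq> gcos M i 0}},
     monoid.mult = (\<lambda>F G. \<lambda>d. gcos M d (\<Sum>i\<le>d. grep (F i) * grep (G (d - i)))),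
     one = (\<lambda>i. gcos M i (if i = 0 then 1 else 0)),
     zero = (\<lambda>i. gcos M i 0),
     add = (\<lambda>F G. \<lambda>i. gcos M i (grep (F i) + grep (G i)))\<rparr>"

definition gr_const :: "(nat \<Rightarrow> ('w, 'k::comm_ring_1) mpoly set) \<Rightarrow> 'k \<Rightarrow> (nat \<Rightarrow> ('w, 'k) mpoly set)" where
  "gr_const M c = (\<lambda>i. gcos M i (if i = 0 then pconst c else 0))"

definition grR_P :: "nat \<Rightarrow> nat rel \<Rightarrow> (nat \<Rightarrow> (nat, 'k::comm_ring_1) mpoly set) ring" where
  "grR_P n R = gr_ring (mpow n R)"

text \<open>S = k[U_J], J \<in> J_conn: polynomials in variables indexed by nat sets, using only
  variables from J_conn.\<close>
definition S_ring :: "nat \<Rightarrow> nat rel \<Rightarrow> (nat set, 'k::comm_ring_1) mpoly set" where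
  "S_ring n R = {g. \<forall>m\<in>Poly_Mapping.keys g. Poly_Mapping.keys m \<subseteq> J_conn n R}"

definition xJ :: "nat set \<Rightarrow> (nat, 'k::comm_ring_1) mpoly" where
  "xJ J = (\<Prod>j\<in>J. pvar j)"

definition phi :: "(nat set, 'k::comm_ring_1) mpoly \<Rightarrow> (nat, 'k) mpoly" where
  "phi g = peval xJ g"

definition I_P :: "nat \<Rightarrow> nat rel \<Rightarrow> (nat set, 'k::comm_ring_1) mpoly set" where
  "I_P n R = {g \<in> S_ring n R. phi g = 0}"

text \<open>gr(phi): S \<rightarrow> gr(R_P), the k-algebra map with U_J \<mapsto> class of x^J in m/m^2;
  a form of degree d goes to the class of its image in m^d/m^(d+1).\<close>
definition gr_phi :: "nat \<Rightarrow> nat rel \<Rightarrow> (nat set, 'k::comm_ring_1) mpoly \<Rightarrow> (nat \<Rightarrow> (nat, 'k) mpoly set)" where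
  "gr_phi n R g = (\<lambda>d. gcos (mpow n R) d (phi (hom_comp d g)))"

definition I_gr_P :: "nat \<Rightarrow> nat rel \<Rightarrow> (nat set, 'k::comm_ring_1) mpoly set" where
  "I_gr_P n R = {g \<in> S_ring n R. gr_phi n R g = \<zero>\<^bsub>grR_P n R\<^esub>}"

definition gr_iso_R_P :: "nat \<Rightarrow> nat rel \<Rightarrow> 'k::comm_ring_1 itself \<Rightarrow> bool" where
  "gr_iso_R_P n R _ \<longleftrightarrow> (\<exists>h. h \<in> ring_iso (grR_P n R) (R_P_ring n R :: (nat, 'k) mpoly ring) \<and>
      (\<forall>c::'k. h (gr_const (mpow n R) c) = pconst c))"

end

theory Submission
  imports Defs
begin



definition dcl :: "nat rel \<Rightarrow> nat set \<Rightarrow> bool" where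
  "dcl R K \<longleftrightarrow> (\<forall>i j. j \<in> K \<and> (i, j) \<in> R \<longrightarrow> i \<in> K)"

definition dn :: "nat rel \<Rightarrow> nat \<Rightarrow> nat set" where
  "dn R v = {u. (u, v) \<in> R}"

definition reach :: "nat rel \<Rightarrow> nat set \<Rightarrow> nat \<Rightarrow> nat set" where
  "reach R K x = {y \<in> K. (x, y) \<in> (hasse_edges R K)\<^sup>*}"

definition comps :: "nat rel \<Rightarrow> nat set \<Rightarrow> nat set set" where
  "comps R K = reach R K ` K"

lemma order_ideal_dcl: "order_ideal n R K \<Longrightarrow> dcl R K"
  unfolding order_ideal_def dcl_def by blast

lemma hasse_edges_sub: "(a, b) \<in> hasse_edges R K \<Longrightarrow> a \<in> K \<and> b \<in> K"
  unfolding hasse_edges_def covers_in_def by auto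

lemma hasse_edges_sym: "(a, b) \<in> hasse_edges R K \<Longrightarrow> (b, a) \<in> hasse_edges R K"
  unfolding hasse_edges_def by auto

lemma hasse_rtrancl_sym:
  assumes "(a, b) \<in> (hasse_edges R K)\<^sup>*" shows "(b, a) \<in> (hasse_edges R K)\<^sup>*"
  using assms
proof (induction rule: rtrancl_induct)
  case base then show ?case by simp
next
  case (step y z)
  then show ?case using hasse_edges_sym
    by (meson converse_rtrancl_into_rtrancl)
qed

lemma hasse_rtrancl_mem:
  assumes "(a, b) \<in> (hasse_edges R K)\<^sup>*" "a \<in> K" shows "b \<in> K"
  using assms by (induction rule: rtrancl_induct) (auto dest: hasse_edges_sub)

lemma hasse_edges_mono:
  assumes "dcl R K1" "K1 \<subseteq> K2" "(a, b) \<in> hasse_edges R K1"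
  shows "(a, b) \<in> hasse_edges R K2"
proof -
  have "covers_in R K2 i j" if "covers_in R K1 i j" for i j
    using that assms(1,2) unfolding covers_in_def strict_le_def dcl_def by blast
  then show ?thesis using assms(3) unfolding hasse_edges_def by auto
qed

lemma hasse_rtrancl_mono:
  assumes "dcl R K1" "K1 \<subseteq> K2" "(a, b) \<in> (hasse_edges R K1)\<^sup>*"
  shows "(a, b) \<in> (hasse_edges R K2)\<^sup>*"
  using assms(3) by (induction rule: rtrancl_induct)
    (auto intro: rtrancl_into_rtrancl hasse_edges_mono[OF assms(1,2)])

lemma hasse_edges_restrict:
  assumes "C \<subseteq> K" "(a, b) \<in> hasse_edges R K" "a \<in> C" "b \<in> C"
  shows "(a, b) \<in> hasse_edges R C"
  using assms unfolding hasse_edges_def covers_in_def by blast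

lemma chain_path:
  assumes "trans R" "antisym R" "finite K" "\<forall>x\<in>K. (x, x) \<in> R"
  shows "u \<in> K \<Longrightarrow> v \<in> K \<Longrightarrow> (u, v) \<in> R \<Longrightarrow> (u, v) \<in> (hasse_edges R K)\<^sup>*"
proof (induction "card {k\<in>K. (u, k) \<in> R \<and> (k, v) \<in> R}" arbitrary: u v rule: less_induct)
  case (less u v)
  show ?case
  proof (cases "u = v")
    case True then show ?thesis by simp
  next
    case False
    show ?thesis
    proof (cases "covers_in R K u v")
      case True
      then have "(u, v) \<in> hasse_edges R K" unfolding hasse_edges_def by auto
      then show ?thesis by simp
    next
      case False2: False
      then obtain k where k: "k \<in> K" "strict_le R u k" "strict_le R k v"
        using less.prems False unfolding covers_in_def strict_le_def by blast
      let ?I = "\<lambda>u v. {k\<in>K. (u, k) \<in> R \<and> (k, v) \<in> R}"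
      have ukv: "(u,k) \<in> R" "(k,v) \<in> R" "u \<noteq> k" "k \<noteq> v" using k unfolding strict_le_def by auto
      have s1: "?I u k \<subset> ?I u v"
      proof
        show "?I u k \<subseteq> ?I u v" using ukv assms(1) by (auto elim: transE)
        have "v \<notin> ?I u k" using ukv assms(2) by (auto dest: antisymD)
        moreover have "v \<in> ?I u v" using less.prems ukv assms(1,4) by (auto elim: transE)
        ultimately show "?I u k \<noteq> ?I u v" by blast
      qed
      have s2: "?I k v \<subset> ?I u v"
      proof
        show "?I k v \<subseteq> ?I u v" using ukv assms(1) by (auto elim: transE)
        have "u \<notin> ?I k v" using ukv assms(2) by (auto dest: antisymD)
        moreover have "u \<in> ?I u v" using less.prems ukv assms(1,4) by (auto elim: transE)
        ultimately show "?I k v \<noteq> ?I u v" by blast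
      qed
      have f: "finite (?I u v)" using assms(3) by auto
      have "(u, k) \<in> (hasse_edges R K)\<^sup>*"
        using less.hyps[OF psubset_card_mono[OF f s1]] less.prems k ukv by blast
      moreover have "(k, v) \<in> (hasse_edges R K)\<^sup>*"
        using less.hyps[OF psubset_card_mono[OF f s2]] less.prems k ukv by blast
      ultimately show ?thesis by simp
    qed
  qed
qed

lemma po_facts:
  assumes "partial_order_on {1..n} R"
  shows "trans R" "antisym R" "\<And>x. x \<in> {1..n} \<Longrightarrow> (x, x) \<in> R"
  using assms unfolding partial_order_on_def preorder_on_def refl_on_def by auto

lemma reach_self: "x \<in> K \<Longrightarrow> x \<in> reach R K x"
  unfolding reach_def by auto

lemma reach_sub: "reach R K x \<subseteq> K"
  unfolding reach_def by auto

lemma reach_eq: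
  assumes "y \<in> reach R K x" shows "reach R K y = reach R K x"
proof -
  have xy: "(x, y) \<in> (hasse_edges R K)\<^sup>*" using assms unfolding reach_def by auto
  have yx: "(y, x) \<in> (hasse_edges R K)\<^sup>*" using hasse_rtrancl_sym[OF xy] .
  show ?thesis unfolding reach_def
  proof (intro equalityI subsetI)
    fix z assume "z \<in> {z \<in> K. (y, z) \<in> (hasse_edges R K)\<^sup>*}"
    then show "z \<in> {z \<in> K. (x, z) \<in> (hasse_edges R K)\<^sup>*}" using rtrancl_trans[OF xy] by auto
  next
    fix z assume "z \<in> {z \<in> K. (x, z) \<in> (hasse_edges R K)\<^sup>*}"
    then show "z \<in> {z \<in> K. (y, z) \<in> (hasse_edges R K)\<^sup>*}" using rtrancl_trans[OF yx] by auto
  qed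
qed

lemma comps_disjoint:
  assumes "C1 \<in> comps R K" "C2 \<in> comps R K" "C1 \<inter> C2 \<noteq> {}" shows "C1 = C2"
proof -
  obtain x1 x2 where c: "C1 = reach R K x1" "C2 = reach R K x2" using assms unfolding comps_def by auto
  obtain z where "z \<in> C1" "z \<in> C2" using assms(3) by auto
  then show ?thesis using reach_eq c by metis
qed

lemma Union_comps: "\<Union>(comps R K) = K"
  unfolding comps_def using reach_self reach_sub by fastforce

lemma finite_comps: "finite K \<Longrightarrow> finite (comps R K)"
  unfolding comps_def by auto

lemma comps_nonempty: "C \<in> comps R K \<Longrightarrow> C \<noteq> {}"
  unfolding comps_def using reach_self by fastforce

lemma comps_sub: "C \<in> comps R K \<Longrightarrow> C \<subseteq> K"
  unfolding comps_def using reach_sub by fastforce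

lemma comp_path:
  assumes "C = reach R K a" "b \<in> C"
  shows "(a, b) \<in> (hasse_edges R C)\<^sup>*"
proof -
  have ab: "(a, b) \<in> (hasse_edges R K)\<^sup>*" using assms unfolding reach_def by auto
  have bK: "b \<in> K" using assms unfolding reach_def by auto
  have "a \<in> K" using hasse_rtrancl_mem[OF hasse_rtrancl_sym[OF ab] bK] .
  have "(a, y) \<in> (hasse_edges R C)\<^sup>* \<and> y \<in> C" if "(a, y) \<in> (hasse_edges R K)\<^sup>*" for y
    using that
  proof (induction rule: rtrancl_induct)
    case base then show ?case using \<open>a \<in> K\<close> reach_self assms(1) by auto
  next
    case (step y z)
    have "(a, z) \<in> (hasse_edges R K)\<^sup>*" using step(1,2) by (rule rtrancl_into_rtrancl)
    moreover have "z \<in> K" using hasse_edges_sub[OF step(2)] by auto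
    moreover have "C = reach R K a" using assms(1) reach_eq step.IH by metis
    ultimately have zC: "z \<in> C" unfolding reach_def by auto
    have "C \<subseteq> K" using assms(1) reach_sub by auto
    then have "(y, z) \<in> hasse_edges R C" using hasse_edges_restrict step zC by blast
    then show ?case using step zC by (auto intro: rtrancl_into_rtrancl)
  qed
  then show ?thesis using ab by auto
qed

lemma comp_connected: "C \<in> comps R K \<Longrightarrow> hasse_connected R C"
  unfolding hasse_connected_def
proof (intro ballI)
  fix a b assume C: "C \<in> comps R K" and ab: "a \<in> C" "b \<in> C"
  obtain x where Cx: "C = reach R K x" using C unfolding comps_def by auto
  then have "C = reach R K a" using reach_eq ab by metis
  then show "(a, b) \<in> (hasse_edges R C)\<^sup>*" using comp_path ab by metis
qed

lemma comp_dcl: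
  assumes "dcl R K" "finite K" "trans R" "antisym R" "\<forall>x\<in>K. (x, x) \<in> R" "C \<in> comps R K"
  shows "dcl R C"
  unfolding dcl_def
proof (intro allI impI)
  fix i j assume h: "j \<in> C \<and> (i, j) \<in> R"
  obtain x where Cx: "C = reach R K x" using assms(6) unfolding comps_def by auto
  have jK: "j \<in> K" using h Cx reach_sub by auto
  have iK: "i \<in> K" using assms(1) h jK unfolding dcl_def by blast
  have "(i, j) \<in> (hasse_edges R K)\<^sup>*" using chain_path[OF assms(3,4,2,5) iK jK] h by auto
  then have "(j, i) \<in> (hasse_edges R K)\<^sup>*" by (rule hasse_rtrancl_sym)
  moreover have "(x, j) \<in> (hasse_edges R K)\<^sup>*" using h Cx unfolding reach_def by auto
  ultimately have "(x, i) \<in> (hasse_edges R K)\<^sup>*" by (meson rtrancl_trans)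
  then show "i \<in> C" using Cx iK unfolding reach_def by auto
qed

lemma comp_ideal:
  assumes po: "partial_order_on {1..n} R" and K: "order_ideal n R K" and C: "C \<in> comps R K"
  shows "order_ideal n R C"
proof -
  have Kn: "K \<subseteq> {1..n}" using K unfolding order_ideal_def by auto
  have "dcl R C"
    by (rule comp_dcl[OF order_ideal_dcl[OF K] finite_subset[OF Kn] po_facts(1,2)[OF po] _ C])
       (use Kn po_facts(3)[OF po] in auto)
  then show ?thesis using comps_sub[OF C] Kn unfolding order_ideal_def dcl_def by blast
qed

lemma comp_J_conn:
  assumes po: "partial_order_on {1..n} R" and K: "order_ideal n R K" and C: "C \<in> comps R K"
  shows "C \<in> J_conn n R"
  unfolding J_conn_def using comp_ideal[OF po K C] comp_connected[OF C] comps_nonempty[OF C] by auto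

lemma connected_comps:
  assumes "hasse_connected R K" "K \<noteq> {}" shows "comps R K = {K}"
proof -
  have "reach R K x = K" if "x \<in> K" for x
    using assms that unfolding hasse_connected_def reach_def by auto
  then show ?thesis unfolding comps_def using assms(2) by auto
qed

lemma card_comps_le1_connected:
  assumes "K \<noteq> {}" "finite K" "card (comps R K) \<le> 1" shows "hasse_connected R K"
proof -
  have ne: "comps R K \<noteq> {}" using assms(1) Union_comps[of R K] by auto
  have "card (comps R K) \<noteq> 0" using ne finite_comps[OF assms(2)] by simp
  then have "card (comps R K) = 1" using assms(3) by linarith
  then obtain C where "comps R K = {C}" by (rule card_1_singletonE)
  moreover then have "C = K" using Union_comps[of R K] by auto
  ultimately show ?thesis using comp_connected by blast
qed

lemma dn_J_conn:
  assumes po: "partial_order_on {1..n} R" and K: "order_ideal n R K" and v: "v \<in> K"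
  shows "dn R v \<in> J_conn n R" "dn R v \<subseteq> K"
proof -
  have Kn: "K \<subseteq> {1..n}" using K unfolding order_ideal_def by auto
  show sub: "dn R v \<subseteq> K" using K v unfolding order_ideal_def dn_def by auto
  have tr: "trans R" and an: "antisym R" using po_facts[OF po] by auto
  have vv: "v \<in> dn R v" using po_facts(3)[OF po] v Kn unfolding dn_def by auto
  have oi: "order_ideal n R (dn R v)" unfolding order_ideal_def
  proof (intro conjI allI impI)
    show "dn R v \<subseteq> {1..n}" using sub Kn by auto
    fix i j assume "j \<in> dn R v \<and> (i, j) \<in> R"
    then show "i \<in> dn R v" using tr unfolding dn_def trans_def by blast
  qed
  have fin: "finite (dn R v)" by (rule finite_subset[of _ "{1..n}"]) (use sub Kn in auto)
  have rf: "\<forall>x\<in>dn R v. (x, x) \<in> R" using sub Kn po_facts(3)[OF po] by auto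
  have p: "(a, v) \<in> (hasse_edges R (dn R v))\<^sup>*" if "a \<in> dn R v" for a
  proof -
    have "(a, v) \<in> R" using that unfolding dn_def by simp
    then show ?thesis using chain_path[OF tr an fin rf that vv] by simp
  qed
  have "hasse_connected R (dn R v)" unfolding hasse_connected_def
  proof (intro ballI)
    fix a b assume "a \<in> dn R v" "b \<in> dn R v"
    then show "(a, b) \<in> (hasse_edges R (dn R v))\<^sup>*"
      using rtrancl_trans[OF p hasse_rtrancl_sym[OF p]] by blast
  qed
  then show "dn R v \<in> J_conn n R" unfolding J_conn_def using oi vv by auto
qed




lemma exists_maximal:
  fixes R :: "nat rel" and Y :: "nat set"
  assumes "finite Y" "Y \<noteq> {}" "trans R" "antisym R" "\<forall>x\<in>Y. (x, x) \<in> R"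
  shows "\<exists>v\<in>Y. \<forall>y\<in>Y. (v, y) \<in> R \<longrightarrow> y = v"
proof -
  define f where "f y = card (dn R y \<inter> Y)" for y
  let ?M = "Max (f ` Y)"
  have "?M \<in> f ` Y" using assms(1,2) by (intro Max_in) auto
  then obtain v where v: "v \<in> Y" "f v = ?M" by auto
  have le: "f y \<le> f v" if "y \<in> Y" for y using v that assms(1) by simp
  show ?thesis
  proof (intro bexI[OF _ v(1)] ballI impI)
    fix y assume y: "y \<in> Y" "(v, y) \<in> R"
    show "y = v"
    proof (rule ccontr)
      assume ne: "y \<noteq> v"
      have "dn R v \<inter> Y \<subset> dn R y \<inter> Y"
      proof
        show "dn R v \<inter> Y \<subseteq> dn R y \<inter> Y" using y assms(3) unfolding dn_def trans_def by blast
        have "y \<in> dn R y \<inter> Y" using y assms(5) unfolding dn_def by auto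
        moreover have "y \<notin> dn R v" using y ne assms(4) unfolding dn_def antisym_def by blast
        ultimately show "dn R v \<inter> Y \<noteq> dn R y \<inter> Y" by blast
      qed
      then have "f v < f y" unfolding f_def using assms(1) by (intro psubset_card_mono) auto
      then show False using le[OF y(1)] by simp
    qed
  qed
qed

lemma w_exists_aux:
  fixes R :: "nat rel" and Y :: "nat set"
  assumes "trans R" "antisym R"
  shows "finite Y \<Longrightarrow> (\<forall>v\<in>Y. dn R v \<subseteq> Y) \<Longrightarrow> (\<forall>x\<in>Y. (x, x) \<in> R) \<Longrightarrow>
     \<exists>w::nat \<Rightarrow> int. \<forall>v\<in>Y. sum w (dn R v) = 1"
proof (induction "card Y" arbitrary: Y rule: less_induct)
  case (less Y)
  show ?case
  proof (cases "Y = {}")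
    case True then show ?thesis by auto
  next
    case False
    obtain v where v: "v \<in> Y" "\<forall>y\<in>Y. (v, y) \<in> R \<longrightarrow> y = v"
      using exists_maximal[OF less.prems(1) False assms less.prems(3)] by blast
    let ?Y = "Y - {v}"
    have cl: "\<forall>u\<in>?Y. dn R u \<subseteq> ?Y"
    proof
      fix u assume u: "u \<in> ?Y"
      have "v \<notin> dn R u" using v u unfolding dn_def by auto
      then show "dn R u \<subseteq> ?Y" using less.prems(2) u by auto
    qed
    have "card ?Y < card Y" using v less.prems(1) by (meson card_Diff1_less)
    then obtain w' :: "nat \<Rightarrow> int" where w': "\<forall>u\<in>?Y. sum w' (dn R u) = 1"
      using less.hyps[of ?Y] less.prems cl by auto
    define w where "w = w'(v := 1 - sum w' (dn R v - {v}))"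
    have "\<forall>u\<in>Y. sum w (dn R u) = 1"
    proof
      fix u assume u: "u \<in> Y"
      show "sum w (dn R u) = 1"
      proof (cases "u = v")
        case True
        have fin: "finite (dn R v)" using less.prems(2) v(1) by (intro finite_subset[OF _ less.prems(1)]) auto
        have vin: "v \<in> dn R v" using less.prems(3) v(1) unfolding dn_def by auto
        have "sum w (dn R v) = w v + sum w (dn R v - {v})"
          using fin vin by (simp add: sum.remove)
        also have "sum w (dn R v - {v}) = sum w' (dn R v - {v})"
          unfolding w_def by (intro sum.cong) auto
        finally show ?thesis using True unfolding w_def by simp
      next
        case False
        then have "v \<notin> dn R u" using v u unfolding dn_def by auto
        then have "sum w (dn R u) = sum w' (dn R u)" unfolding w_def by (intro sum.cong) auto
        then show ?thesis using w' u False by auto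
      qed
    qed
    then show ?thesis by blast
  qed
qed

definition wprop :: "nat \<Rightarrow> nat rel \<Rightarrow> (nat \<Rightarrow> int) \<Rightarrow> bool" where
  "wprop n R w \<longleftrightarrow> (\<forall>v\<in>{1..n}. dn R v \<subseteq> {1..n} \<longrightarrow> sum w (dn R v) = 1)"

lemma w_exists:
  assumes po: "partial_order_on {1..n} R"
  shows "\<exists>w. wprop n R w"
proof -
  define X where "X = {v\<in>{1..n}. dn R v \<subseteq> {1..n}}"
  have tr: "trans R" using po_facts[OF po] by auto
  have cl: "\<forall>v\<in>X. dn R v \<subseteq> X"
  proof
    fix v assume v: "v \<in> X"
    show "dn R v \<subseteq> X"
    proof
      fix u assume u: "u \<in> dn R v"
      have "dn R u \<subseteq> dn R v" using u tr unfolding dn_def by (auto elim: transE)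
      then show "u \<in> X" using u v unfolding X_def by auto
    qed
  qed
  have fin: "finite X" unfolding X_def by (rule finite_subset[of _ "{1..n}"]) auto
  have rf: "\<forall>x\<in>X. (x, x) \<in> R" using po_facts(3)[OF po] unfolding X_def by auto
  obtain w :: "nat \<Rightarrow> int" where w: "\<forall>v\<in>X. sum w (dn R v) = 1"
    using w_exists_aux[OF po_facts(1,2)[OF po] fin cl rf] by blast
  have "wprop n R w" unfolding wprop_def
  proof (intro ballI impI)
    fix v assume "v \<in> {1..n}" "dn R v \<subseteq> {1..n}"
    then have "v \<in> X" unfolding X_def by simp
    then show "sum w (dn R v) = 1" using w by simp
  qed
  then show ?thesis by blast
qed

definition cond3 :: "nat \<Rightarrow> nat rel \<Rightarrow> bool" where
  "cond3 n R \<longleftrightarrow> (\<forall>A C. A \<in> J_conn n R \<and> C \<in> J_conn n R \<and> intersect_nontrivially A C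
      \<longrightarrow> hasse_connected R (A \<inter> C))"

lemma dcl_conn_reach:
  assumes "dcl R D" "D \<subseteq> A'" "x \<in> D" "y \<in> D" "hasse_connected R D"
  shows "y \<in> reach R A' x"
proof -
  have "(x, y) \<in> (hasse_edges R D)\<^sup>*" using assms(3-5) unfolding hasse_connected_def by auto
  then have "(x, y) \<in> (hasse_edges R A')\<^sup>*" using hasse_rtrancl_mono[OF assms(1,2)] by auto
  then show ?thesis using assms(2,4) unfolding reach_def by auto
qed

lemma order_ideal_sub: "order_ideal n R K \<Longrightarrow> K \<subseteq> {1..n}"
  unfolding order_ideal_def by auto

lemma order_ideal_finite: "order_ideal n R K \<Longrightarrow> finite K"
  using order_ideal_sub by (rule finite_subset) auto

lemma w_comps:
  assumes po: "partial_order_on {1..n} R" and wp: "wprop n R w" and c3: "cond3 n R"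
  shows "order_ideal n R K \<Longrightarrow> sum w K = int (card (comps R K))"
proof (induction "card K" arbitrary: K rule: less_induct)
  case (less K)
  have tr: "trans R" and an: "antisym R" using po_facts[OF po] by auto
  have Kn: "K \<subseteq> {1..n}" using less.prems by (rule order_ideal_sub)
  have finK: "finite K" using less.prems by (rule order_ideal_finite)
  have rfK: "\<forall>x\<in>K. (x, x) \<in> R" using Kn po_facts(3)[OF po] by auto
  show ?case
  proof (cases "K = {}")
    case True then show ?thesis unfolding comps_def by simp
  next
    case Kne: False
    show ?thesis
    proof (cases "hasse_connected R K")
      case False
      have compsK: "\<And>C. C \<in> comps R K \<Longrightarrow> sum w C = 1"
      proof -
        fix C assume C: "C \<in> comps R K"
        have oC: "order_ideal n R C" by (rule comp_ideal[OF po less.prems C])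
        have CK: "C \<subseteq> K" using comps_sub[OF C] .
        have "C \<noteq> K" using comp_connected[OF C] False by auto
        then have "C \<subset> K" using CK by auto
        then have "card C < card K" using finK by (intro psubset_card_mono)
        then have "sum w C = int (card (comps R C))" using less.hyps oC by blast
        moreover have "comps R C = {C}"
          using connected_comps[OF comp_connected[OF C] comps_nonempty[OF C]] .
        ultimately show "sum w C = 1" by simp
      qed
      have "sum w K = sum w (\<Union>(comps R K))" using Union_comps[of R K] by simp
      also have "\<dots> = sum (sum w) (comps R K)"
      proof -
        have "\<forall>A\<in>comps R K. finite A"
        proof
          fix A assume "A \<in> comps R K"
          show "finite A" using finite_subset[OF comps_sub[OF \<open>A \<in> comps R K\<close>] finK] .
        qed
        moreover have "\<forall>A\<in>comps R K. \<forall>B\<in>comps R K. A \<noteq> B \<longrightarrow> A \<inter> B = {}"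
        proof (intro ballI impI)
          fix A B assume "A \<in> comps R K" "B \<in> comps R K" "A \<noteq> B"
          then show "A \<inter> B = {}" using comps_disjoint[of A R K B] by auto
        qed
        ultimately show ?thesis using sum.Union_disjoint[of "comps R K" w] by simp
      qed
      also have "\<dots> = sum (\<lambda>_. 1) (comps R K)" using compsK by (intro sum.cong) auto
      finally show ?thesis by simp
    next
      case conn: True
      obtain v where v: "v \<in> K" "\<forall>y\<in>K. (v, y) \<in> R \<longrightarrow> y = v"
        using exists_maximal[OF finK Kne tr an rfK] by blast
      define A where "A = dn R v"
      define K' where "K' = K - {v}"
      define A' where "A' = A - {v}"
      have AJ: "A \<in> J_conn n R" and AK: "A \<subseteq> K" unfolding A_def using dn_J_conn[OF po less.prems v(1)] by auto
      have vA: "v \<in> A" unfolding A_def dn_def using rfK v(1) by auto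
      have dclK: "dcl R K" using order_ideal_dcl[OF less.prems] .
      have oK': "order_ideal n R K'" unfolding order_ideal_def
      proof (intro conjI allI impI)
        show "K' \<subseteq> {1..n}" using Kn unfolding K'_def by auto
        fix i j assume h: "j \<in> K' \<and> (i, j) \<in> R"
        then have iK: "i \<in> K" using dclK unfolding K'_def dcl_def by blast
        have "i \<noteq> v" using h v unfolding K'_def by auto
        then show "i \<in> K'" using iK unfolding K'_def by auto
      qed
      have oA': "order_ideal n R A'" unfolding order_ideal_def
      proof (intro conjI allI impI)
        show "A' \<subseteq> {1..n}" using Kn AK unfolding A'_def by auto
        fix i j assume h: "j \<in> A' \<and> (i, j) \<in> R"
        then have iA: "i \<in> A" using tr unfolding A'_def A_def dn_def by (auto elim: transE)
        have "i \<noteq> v"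
        proof
          assume "i = v"
          then have "(v, j) \<in> R" "(j, v) \<in> R" using h unfolding A'_def A_def dn_def by auto
          then have "j = v" using an by (auto dest: antisymD)
          then show False using h unfolding A'_def by auto
        qed
        then show "i \<in> A'" using iA unfolding A'_def by auto
      qed
      have A'K': "A' \<subseteq> K'" using AK unfolding A'_def K'_def by auto
      have cK': "card K' < card K" unfolding K'_def using v(1) finK by (meson card_Diff1_less)
      have cA': "card A' < card K"
        using card_mono[OF finite_subset[OF _ finK] A'K'] cK' unfolding K'_def by auto
      have IK': "sum w K' = int (card (comps R K'))" using less.hyps[OF cK' oK'] .
      have IA': "sum w A' = int (card (comps R A'))" using less.hyps[OF cA' oA'] .
      have sA: "sum w A = 1" using wp v(1) Kn AK unfolding wprop_def A_def by auto
      have finA: "finite A" using AK finK by (rule finite_subset)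
      have finK': "finite K'" using finK unfolding K'_def by auto
      have UA: "A \<union> K' = K" using AK vA v(1) unfolding K'_def by auto
      have IA: "A \<inter> K' = A'" unfolding A'_def K'_def using AK by auto
      have sK: "sum w K = sum w A + sum w K' - sum w A'"
        using sum_Un[OF finA finK', of w] UA IA by simp
      have dclA': "dcl R A'" using order_ideal_dcl[OF oA'] .
      have KF: "reach R K' x \<inter> A' = reach R A' x" if x: "x \<in> A'" for x
      proof (intro equalityI subsetI)
        fix y assume "y \<in> reach R A' x"
        then have "(x, y) \<in> (hasse_edges R A')\<^sup>*" "y \<in> A'" unfolding reach_def by auto
        then show "y \<in> reach R K' x \<inter> A'"
          using hasse_rtrancl_mono[OF dclA' A'K'] A'K' unfolding reach_def by auto
      next
        fix y assume y: "y \<in> reach R K' x \<inter> A'"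
        define C where "C = reach R K' x"
        have xK': "x \<in> K'" using x A'K' by auto
        have Cc: "C \<in> comps R K'" unfolding C_def comps_def using xK' by auto
        have CJ: "C \<in> J_conn n R" using comp_J_conn[OF po oK' Cc] .
        have dclC: "dcl R C" using order_ideal_dcl[OF comp_ideal[OF po oK' Cc]] .
        have xC: "x \<in> C" unfolding C_def using reach_self[OF xK'] .
        have yC: "y \<in> C" using y unfolding C_def by auto
        have CK': "C \<subseteq> K'" using comps_sub[OF Cc] .
        have vC: "v \<notin> C" using CK' unfolding K'_def by auto
        show "y \<in> reach R A' x"
        proof (cases "C \<subseteq> A")
          case True
          then have "C \<subseteq> A'" using vC unfolding A'_def by auto
          then show ?thesis using dcl_conn_reach[OF dclC _ xC yC comp_connected[OF Cc]] by simp
        next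
          case False
          have xA: "x \<in> A" using x unfolding A'_def by auto
          have "A \<inter> C \<noteq> {}" using xA xC by auto
          moreover have "\<not> A \<subseteq> C" using vA vC by auto
          ultimately have "intersect_nontrivially A C" unfolding intersect_nontrivially_def
            using False by simp
          then have hc: "hasse_connected R (A \<inter> C)"
            using c3[unfolded cond3_def, rule_format, OF conjI[OF AJ conjI[OF CJ]]] by simp
          have dclA: "dcl R A" using AJ unfolding J_conn_def using order_ideal_dcl by auto
          have dAC: "dcl R (A \<inter> C)" using dclA dclC unfolding dcl_def by blast
          have sub: "A \<inter> C \<subseteq> A'" using vC unfolding A'_def by auto
          have yA: "y \<in> A" using y unfolding A'_def by auto
          show ?thesis using dcl_conn_reach[OF dAC sub _ _ hc, of x y] xA xC yA yC by simp
        qed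
      qed
      have SF: "C \<inter> A' \<noteq> {}" if C: "C \<in> comps R K'" for C
      proof -
        obtain c where c: "c \<in> K'" "C = reach R K' c" using C unfolding comps_def by auto
        have cK: "c \<in> K" using c unfolding K'_def by auto
        have cv: "(c, v) \<in> (hasse_edges R K)\<^sup>*" using conn cK v(1) unfolding hasse_connected_def by auto
        have gen: "(\<exists>y\<in>A'. (c, y) \<in> (hasse_edges R K')\<^sup>*) \<or> (z \<in> K' \<and> (c, z) \<in> (hasse_edges R K')\<^sup>*)"
          if "(c, z) \<in> (hasse_edges R K)\<^sup>*" for z
          using that
        proof (induction rule: rtrancl_induct)
          case base then show ?case using c by auto
        next
          case (step y z)
          show ?case
          proof (cases "\<exists>y\<in>A'. (c, y) \<in> (hasse_edges R K')\<^sup>*")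
            case True then show ?thesis by blast
          next
            case False
            then have yK': "y \<in> K'" and cy: "(c, y) \<in> (hasse_edges R K')\<^sup>*" using step.IH by auto
            have zK: "z \<in> K" using hasse_edges_sub[OF step.hyps(2)] by auto
            show ?thesis
            proof (cases "z \<in> K'")
              case True
              have "(y, z) \<in> hasse_edges R K'"
                using hasse_edges_restrict[of K' K y z R] step.hyps(2) yK' True unfolding K'_def by auto
              then show ?thesis using cy True by (auto intro: rtrancl_into_rtrancl)
            next
              case False
              then have zv: "z = v" using zK unfolding K'_def by auto
              have "covers_in R K y v \<or> covers_in R K v y"
                using step.hyps(2) zv unfolding hasse_edges_def by auto
              moreover have "\<not> covers_in R K v y"
                using v yK' unfolding covers_in_def strict_le_def K'_def by auto
              ultimately have "(y, v) \<in> R" unfolding covers_in_def strict_le_def by auto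
              then have "y \<in> A'" using yK' unfolding A'_def A_def dn_def K'_def by auto
              then show ?thesis using cy by blast
            qed
          qed
        qed
        have "v \<notin> K'" unfolding K'_def by auto
        then obtain y where y: "y \<in> A'" "(c, y) \<in> (hasse_edges R K')\<^sup>*" using gen[OF cv] by blast
        then have "y \<in> C" using c A'K' unfolding reach_def by auto
        then show ?thesis using y by auto
      qed
      have img: "comps R A' = (\<lambda>C. C \<inter> A') ` comps R K'"
      proof (intro equalityI subsetI)
        fix D assume "D \<in> comps R A'"
        then obtain x where x: "x \<in> A'" "D = reach R A' x" unfolding comps_def by auto
        then have "D = reach R K' x \<inter> A'" using KF by auto
        moreover have "reach R K' x \<in> comps R K'" using x A'K' unfolding comps_def by auto
        ultimately show "D \<in> (\<lambda>C. C \<inter> A') ` comps R K'" by blast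
      next
        fix D assume "D \<in> (\<lambda>C. C \<inter> A') ` comps R K'"
        then obtain C where C: "C \<in> comps R K'" "D = C \<inter> A'" by auto
        obtain x where x: "x \<in> C" "x \<in> A'" using SF[OF C(1)] by auto
        obtain c where c: "C = reach R K' c" using C(1) unfolding comps_def by auto
        have "C = reach R K' x" using reach_eq x(1) c by metis
        then have "D = reach R A' x" using KF[OF x(2)] C(2) by simp
        then show "D \<in> comps R A'" using x(2) unfolding comps_def by auto
      qed
      have inj: "inj_on (\<lambda>C. C \<inter> A') (comps R K')"
      proof (rule inj_onI)
        fix C1 C2 assume h: "C1 \<in> comps R K'" "C2 \<in> comps R K'" "C1 \<inter> A' = C2 \<inter> A'"
        then have "C1 \<inter> C2 \<noteq> {}" using SF[OF h(1)] by auto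
        then show "C1 = C2" using comps_disjoint[OF h(1,2)] by simp
      qed
      have "card (comps R A') = card (comps R K')" using img card_image[OF inj] by simp
      then have "sum w K = 1" using sK sA IK' IA' by simp
      then show ?thesis using connected_comps[OF conn Kne] by simp
    qed
  qed
qed




definition Ec :: "(nat set \<Rightarrow>\<^sub>0 nat) \<Rightarrow> (nat \<Rightarrow>\<^sub>0 nat)" where
  "Ec m = (\<Sum>J\<in>Poly_Mapping.keys m. \<Sum>j\<in>J. Poly_Mapping.single j (Poly_Mapping.lookup m J))"

lemma xJ_single: "(xJ J :: (nat, 'k::comm_ring_1) mpoly) = Poly_Mapping.single (\<Sum>j\<in>J. Poly_Mapping.single j 1) 1"
proof (cases "finite J")
  case True
  then show ?thesis unfolding xJ_def
  proof (induction J rule: finite_induct)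
    case empty then show ?case by simp
  next
    case (insert j J)
    then show ?case by (simp add: pvar_def mult_single)
  qed
next
  case False then show ?thesis unfolding xJ_def by simp
qed

lemma single_pow_sum:
  "(Poly_Mapping.single (\<Sum>j\<in>J. Poly_Mapping.single j (1::nat)) (1::'k::comm_ring_1)) ^ k
    = Poly_Mapping.single (\<Sum>j\<in>J. Poly_Mapping.single j k) 1"
proof (induction k)
  case 0 then show ?case by simp
next
  case (Suc k)
  have "(\<Sum>j\<in>J. Poly_Mapping.single j (1::nat)) + (\<Sum>j\<in>J. Poly_Mapping.single j k)
      = (\<Sum>j\<in>J. Poly_Mapping.single j (Suc k))"
    by (simp add: sum.distrib[symmetric] single_add[symmetric])
  then show ?case using Suc by (simp add: mult_single)
qed

lemma prod_single:
  "finite S \<Longrightarrow> (\<Prod>J\<in>S. Poly_Mapping.single (e J) (1::'k::comm_ring_1)) = Poly_Mapping.single (\<Sum>J\<in>S. e J) 1"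
  by (induction S rule: finite_induct) (auto simp: mult_single)

lemma img_single:
  "(\<Prod>J\<in>Poly_Mapping.keys m. (xJ J :: (nat, 'k::comm_ring_1) mpoly) ^ Poly_Mapping.lookup m J)
    = Poly_Mapping.single (Ec m) 1"
  unfolding Ec_def xJ_single single_pow_sum by (rule prod_single) simp

lemma phi_formula:
  "(phi g :: (nat, 'k::comm_ring_1) mpoly) = (\<Sum>m\<in>Poly_Mapping.keys g. Poly_Mapping.single (Ec m) (Poly_Mapping.lookup g m))"
  unfolding phi_def peval_def img_single pconst_def by (simp add: mult_single)

lemma phi_superset:
  assumes "finite T" "Poly_Mapping.keys g \<subseteq> T"
  shows "(phi g :: (nat, 'k::comm_ring_1) mpoly) = (\<Sum>m\<in>T. Poly_Mapping.single (Ec m) (Poly_Mapping.lookup g m))"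
  unfolding phi_formula
  by (rule sum.mono_neutral_left[OF assms]) (auto simp: in_keys_iff)

lemma lookup_phi:
  "Poly_Mapping.lookup (phi g :: (nat, 'k::comm_ring_1) mpoly) f
    = (\<Sum>m\<in>{m\<in>Poly_Mapping.keys g. Ec m = f}. Poly_Mapping.lookup g m)"
  unfolding phi_formula lookup_sum lookup_single
  by (simp add: sum.inter_filter when_def)

lemma lookup_hom_comp:
  "Poly_Mapping.lookup (hom_comp d g) m = (if mdeg m = d then Poly_Mapping.lookup g m else 0)"
  unfolding hom_comp_def lookup_sum lookup_single
  by (auto simp: when_def sum.inter_filter in_keys_iff sum.delta)

lemma keys_hom_comp:
  "Poly_Mapping.keys (hom_comp d g) = {m\<in>Poly_Mapping.keys g. mdeg m = d}"
  by (auto simp: in_keys_iff lookup_hom_comp split: if_splits)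

lemma lookup_sum_single_set:
  "Poly_Mapping.lookup (\<Sum>j\<in>J. Poly_Mapping.single j (c::nat)) v = (if finite J \<and> v \<in> J then c else 0)"
  by (cases "finite J") (auto simp: lookup_sum lookup_single when_def sum.delta)

lemma lookup_Ec:
  "Poly_Mapping.lookup (Ec m) v = (\<Sum>J\<in>Poly_Mapping.keys m. if finite J \<and> v \<in> J then Poly_Mapping.lookup m J else 0)"
proof -
  have "Poly_Mapping.lookup (Ec m) v = (\<Sum>J\<in>Poly_Mapping.keys m. Poly_Mapping.lookup (\<Sum>j\<in>J. Poly_Mapping.single j (Poly_Mapping.lookup m J)) v)"
    unfolding Ec_def by (rule lookup_sum)
  then show ?thesis by (simp add: lookup_sum_single_set)
qed

lemma mdeg_superset:
  assumes "finite T" "Poly_Mapping.keys m \<subseteq> T"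
  shows "mdeg m = (\<Sum>x\<in>T. Poly_Mapping.lookup m x)"
  unfolding mdeg_def by (rule sum.mono_neutral_left[OF assms]) (auto simp: in_keys_iff)

lemma Ec_superset:
  assumes "finite T" "Poly_Mapping.keys m \<subseteq> T"
  shows "Poly_Mapping.lookup (Ec m) v = (\<Sum>J\<in>T. if finite J \<and> v \<in> J then Poly_Mapping.lookup m J else 0)"
  unfolding lookup_Ec by (rule sum.mono_neutral_left[OF assms]) (auto simp: in_keys_iff)




lemma hom_comp_hom_comp:
  "hom_comp d (hom_comp e g) = (if d = e then hom_comp e g else (0::('v,'k::comm_ring_1) mpoly))"
  by (rule poly_mapping_eqI) (auto simp: lookup_hom_comp)

lemma hom_comp_S: "g \<in> S_ring n R \<Longrightarrow> hom_comp d g \<in> S_ring n R"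
  unfolding S_ring_def by (auto simp: keys_hom_comp)

lemma phi_zero [simp]: "phi 0 = 0"
  unfolding phi_formula by simp

lemma gr_zero: "\<zero>\<^bsub>grR_P n R\<^esub> = (\<lambda>i. gcos (mpow n R) i 0)"
  unfolding grR_P_def gr_ring_def by simp

lemma I_gr_homogeneous: "homogeneous_ideal (I_gr_P n R :: (nat set, 'k::comm_ring_1) mpoly set)"
  unfolding homogeneous_ideal_def
proof (intro ballI allI)
  fix g :: "(nat set, 'k) mpoly" and e
  assume g: "g \<in> I_gr_P n R"
  then have gS: "g \<in> S_ring n R" and gz: "gr_phi n R g = (\<lambda>i. gcos (mpow n R) i 0)"
    unfolding I_gr_P_def gr_zero by auto
  have "gr_phi n R (hom_comp e g) = (\<lambda>i. gcos (mpow n R) i 0)"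
  proof
    fix d
    show "gr_phi n R (hom_comp e g) d = gcos (mpow n R) d 0"
    proof (cases "d = e")
      case True
      then show ?thesis using fun_cong[OF gz, of d] unfolding gr_phi_def by (simp add: hom_comp_hom_comp)
    next
      case False
      then show ?thesis unfolding gr_phi_def by (simp add: hom_comp_hom_comp)
    qed
  qed
  then show "hom_comp e g \<in> I_gr_P n R" unfolding I_gr_P_def gr_zero using hom_comp_S[OF gS] by auto
qed

lemma Ec_add: "Ec (a + b) = Ec a + Ec b"
proof (rule poly_mapping_eqI)
  fix v
  let ?T = "Poly_Mapping.keys a \<union> Poly_Mapping.keys b"
  have f: "finite ?T" by simp
  have "Poly_Mapping.lookup (Ec (a + b)) v = (\<Sum>J\<in>?T. if finite J \<and> v \<in> J then Poly_Mapping.lookup (a + b) J else 0)"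
    by (rule Ec_superset[OF f]) (simp add: keys_add)
  also have "\<dots> = (\<Sum>J\<in>?T. if finite J \<and> v \<in> J then Poly_Mapping.lookup a J else 0)
     + (\<Sum>J\<in>?T. if finite J \<and> v \<in> J then Poly_Mapping.lookup b J else 0)"
    by (simp add: sum.distrib[symmetric] if_distrib) (rule sum.cong, auto simp: lookup_add)
  also have "\<dots> = Poly_Mapping.lookup (Ec a) v + Poly_Mapping.lookup (Ec b) v"
    using Ec_superset[OF f, of a v] Ec_superset[OF f, of b v] by simp
  finally show "Poly_Mapping.lookup (Ec (a + b)) v = Poly_Mapping.lookup (Ec a + Ec b) v"
    by (simp add: lookup_add)
qed

lemma Ec_zero [simp]: "Ec 0 = 0"
  unfolding Ec_def by simp

lemma Ec_single: "Ec (Poly_Mapping.single J k) = (\<Sum>j\<in>J. Poly_Mapping.single j k)"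
  unfolding Ec_def by simp

lemma Ec_sum: "finite F \<Longrightarrow> Ec (\<Sum>D\<in>F. f D) = (\<Sum>D\<in>F. Ec (f D))"
  by (induction F rule: finite_induct) (auto simp: Ec_add)

lemma lookup_sum_single_F:
  "finite F \<Longrightarrow> Poly_Mapping.lookup (\<Sum>D\<in>F. Poly_Mapping.single D (1::nat)) x = (if x \<in> F then 1 else 0)"
  by (simp add: lookup_sum lookup_single when_def sum.delta)

lemma sum_comps_indicator:
  assumes "finite K"
  shows "(\<Sum>D\<in>comps R K. (if v \<in> D then 1 else 0::nat)) = (if v \<in> K then 1 else 0)"
proof -
  have fin: "finite (comps R K)" using finite_comps[OF assms] .
  have e: "(\<Sum>D\<in>comps R K. (if v \<in> D then 1 else 0::nat)) = card {D\<in>comps R K. v \<in> D}"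
    using fin by (simp add: sum.If_cases Int_def)
  show ?thesis
  proof (cases "v \<in> K")
    case True
    have "D = reach R K v" if D: "D \<in> comps R K" "v \<in> D" for D
    proof -
      obtain x where "D = reach R K x" using D(1) unfolding comps_def by auto
      then show ?thesis using reach_eq[of v R K x] D(2) by simp
    qed
    moreover have "reach R K v \<in> comps R K" using True unfolding comps_def by auto
    moreover have "v \<in> reach R K v" using reach_self[OF True] .
    ultimately have "{D\<in>comps R K. v \<in> D} = {reach R K v}" by blast
    then show ?thesis using e True by simp
  next
    case False
    have "v \<notin> D" if "D \<in> comps R K" for D using comps_sub[OF that] False by auto
    then have "{D\<in>comps R K. v \<in> D} = {}" by blast
    then show ?thesis using e False by simp
  qed
qed




lemma union_J_conn:
  assumes po: "partial_order_on {1..n} R" and A: "A \<in> J_conn n R" and C: "C \<in> J_conn n R"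
    and AC: "A \<inter> C \<noteq> {}"
  shows "A \<union> C \<in> J_conn n R"
proof -
  have oA: "order_ideal n R A" and oC: "order_ideal n R C" using A C unfolding J_conn_def by auto
  have cA: "hasse_connected R A" and cC: "hasse_connected R C" using A C unfolding J_conn_def by auto
  have oU: "order_ideal n R (A \<union> C)" using oA oC unfolding order_ideal_def by blast
  obtain x where x: "x \<in> A" "x \<in> C" using AC by auto
  have toX: "(a, x) \<in> (hasse_edges R (A \<union> C))\<^sup>*" if a: "a \<in> A \<union> C" for a
  proof (cases "a \<in> A")
    case True
    have "(a, x) \<in> (hasse_edges R A)\<^sup>*" using cA True x(1) unfolding hasse_connected_def by auto
    then show ?thesis using hasse_rtrancl_mono[OF order_ideal_dcl[OF oA], of "A \<union> C"] by auto
  next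
    case False
    then have aC: "a \<in> C" using a by auto
    have "(a, x) \<in> (hasse_edges R C)\<^sup>*" using cC aC x(2) unfolding hasse_connected_def by auto
    then show ?thesis using hasse_rtrancl_mono[OF order_ideal_dcl[OF oC], of "A \<union> C"] by auto
  qed
  have "hasse_connected R (A \<union> C)" unfolding hasse_connected_def
  proof (intro ballI)
    fix a b assume "a \<in> A \<union> C" "b \<in> A \<union> C"
    then show "(a, b) \<in> (hasse_edges R (A \<union> C))\<^sup>*"
      using rtrancl_trans[OF toX hasse_rtrancl_sym[OF toX]] by blast
  qed
  then show ?thesis using oU x unfolding J_conn_def by auto
qed

lemma homog_cond3:
  assumes po: "partial_order_on {1..n} R"
    and hom: "homogeneous_ideal (I_P n R :: (nat set, 'k::field) mpoly set)"
  shows "cond3 n R"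
  unfolding cond3_def
proof (intro allI impI)
  fix A C assume h: "A \<in> J_conn n R \<and> C \<in> J_conn n R \<and> intersect_nontrivially A C"
  then have A: "A \<in> J_conn n R" and C: "C \<in> J_conn n R" and nt: "intersect_nontrivially A C" by auto
  show "hasse_connected R (A \<inter> C)"
  proof (rule ccontr)
    assume nc: "\<not> hasse_connected R (A \<inter> C)"
    define K where "K = A \<inter> C"
    define F where "F = comps R K"
    have oA: "order_ideal n R A" and oC: "order_ideal n R C" using A C unfolding J_conn_def by auto
    have oK: "order_ideal n R K" unfolding K_def using oA oC unfolding order_ideal_def by blast
    have finK: "finite K" using order_ideal_finite[OF oK] .
    have Kne: "K \<noteq> {}" using nt unfolding intersect_nontrivially_def K_def by auto
    have finF: "finite F" unfolding F_def using finite_comps[OF finK] .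
    have cF: "card F \<ge> 2"
    proof (rule ccontr)
      assume "\<not> card F \<ge> 2"
      then have "card F \<le> 1" by simp
      then have "hasse_connected R K" using card_comps_le1_connected[OF Kne finK] unfolding F_def by simp
      then show False using nc unfolding K_def by simp
    qed
    have FJ: "F \<subseteq> J_conn n R" unfolding F_def using comp_J_conn[OF po oK] by auto
    have AneC: "A \<noteq> C" using nt unfolding intersect_nontrivially_def by auto
    have ACJ: "A \<union> C \<in> J_conn n R" using union_J_conn[OF po A C] Kne unfolding K_def by auto
    have finA: "finite A" using order_ideal_finite[OF oA] .
    have finC: "finite C" using order_ideal_finite[OF oC] .
    have finD: "finite D" if "D \<in> F" for D
      using finite_subset[OF comps_sub[OF that[unfolded F_def]] finK] .
    define m1 :: "nat set \<Rightarrow>\<^sub>0 nat" where "m1 = Poly_Mapping.single A 1 + Poly_Mapping.single C 1"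
    define m2 :: "nat set \<Rightarrow>\<^sub>0 nat" where "m2 = Poly_Mapping.single (A \<union> C) 1 + (\<Sum>D\<in>F. Poly_Mapping.single D 1)"
    have lm1: "Poly_Mapping.lookup m1 x = (if x = A then 1 else 0) + (if x = C then 1 else 0)" for x
      unfolding m1_def by (simp add: lookup_add lookup_single when_def)
    have lm2: "Poly_Mapping.lookup m2 x = (if x = A \<union> C then 1 else 0) + (if x \<in> F then 1 else 0)" for x
      unfolding m2_def lookup_add lookup_sum_single_F[OF finF] by (simp add: lookup_single when_def)
    have km1: "Poly_Mapping.keys m1 \<subseteq> {A, C}" by (auto simp: in_keys_iff lm1 split: if_splits)
    have km2: "Poly_Mapping.keys m2 \<subseteq> insert (A \<union> C) F" by (auto simp: in_keys_iff lm2 split: if_splits)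
    have dm1: "mdeg m1 = 2"
      using mdeg_superset[OF _ km1] AneC by (simp add: lm1)
    have "mdeg m2 = (\<Sum>x\<in>insert (A \<union> C) F. (if x = A \<union> C then 1 else 0) + (if x \<in> F then 1 else 0))"
      using mdeg_superset[OF _ km2] finF by (simp add: lm2)
    also have "\<dots> = 1 + card F"
    proof -
      have "{x. (x = A \<union> C \<or> x \<in> F) \<and> x \<in> F} = F" by auto
      then show ?thesis using finF by (simp add: sum.distrib sum.If_cases Int_def)
    qed
    finally have dm2: "mdeg m2 = 1 + card F" .
    have m12: "m1 \<noteq> m2" using dm1 dm2 cF by auto
    have Ec12: "Ec m1 = Ec m2"
    proof (rule poly_mapping_eqI)
      fix v
      have e1: "Poly_Mapping.lookup (Ec m1) v = (if v \<in> A then 1 else 0) + (if v \<in> C then 1 else 0)"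
        unfolding m1_def Ec_add Ec_single using finA finC by (simp add: lookup_add lookup_sum_single_set)
      have l2: "Poly_Mapping.lookup (\<Sum>D\<in>F. \<Sum>j\<in>D. Poly_Mapping.single j (1::nat)) v = (\<Sum>D\<in>F. if v \<in> D then 1 else 0)"
        unfolding lookup_sum[of _ F] using finD by (intro sum.cong refl) (simp add: lookup_sum_single_set)
      have "Poly_Mapping.lookup (Ec m2) v = (if v \<in> A \<union> C then 1 else 0) + (\<Sum>D\<in>F. if v \<in> D then 1 else 0)"
        unfolding m2_def Ec_add Ec_single Ec_sum[OF finF] lookup_add l2 lookup_sum_single_set using finA finC
        by simp
      also have "(\<Sum>D\<in>F. if v \<in> D then 1 else 0) = (if v \<in> K then 1 else (0::nat))"
        unfolding F_def using sum_comps_indicator[OF finK] .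
      finally show "Poly_Mapping.lookup (Ec m1) v = Poly_Mapping.lookup (Ec m2) v"
        using e1 unfolding K_def by auto
    qed
    define g :: "(nat set, 'k) mpoly" where "g = Poly_Mapping.single m1 1 - Poly_Mapping.single m2 1"
    have lg: "Poly_Mapping.lookup g m = (if m = m1 then 1 else 0) - (if m = m2 then 1 else 0)" for m
      unfolding g_def by (simp add: lookup_minus lookup_single when_def)
    have kg: "Poly_Mapping.keys g \<subseteq> {m1, m2}" by (auto simp: in_keys_iff lg split: if_splits)
    have gS: "g \<in> S_ring n R" unfolding S_ring_def
    proof (rule CollectI, intro ballI)
      fix m assume "m \<in> Poly_Mapping.keys g"
      then have "m = m1 \<or> m = m2" using kg by auto
      then show "Poly_Mapping.keys m \<subseteq> J_conn n R" using km1 km2 A C ACJ FJ by auto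
    qed
    have "phi g = Poly_Mapping.single (Ec m1) (Poly_Mapping.lookup g m1) + Poly_Mapping.single (Ec m2) (Poly_Mapping.lookup g m2)"
      using phi_superset[OF _ kg] m12 by simp
    also have "\<dots> = 0" using m12 Ec12 by (simp add: lg single_add[symmetric])
    finally have "g \<in> I_P n R" unfolding I_P_def using gS by simp
    then have "hom_comp 2 g \<in> I_P n R" using hom unfolding homogeneous_ideal_def by blast
    then have z: "phi (hom_comp 2 g) = 0" unfolding I_P_def by simp
    have "hom_comp 2 g = Poly_Mapping.single m1 1"
      by (rule poly_mapping_eqI) (use dm1 dm2 cF m12 in \<open>auto simp: lookup_hom_comp lg lookup_single when_def\<close>)
    then have "phi (hom_comp 2 g) = Poly_Mapping.single (Ec m1) (1::'k)"
      unfolding phi_formula by simp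
    then have "Poly_Mapping.single (Ec m1) (1::'k) = 0" using z by simp
    then show False by (metis lookup_single_eq lookup_zero one_neq_zero)
  qed
qed

definition Lw :: "nat \<Rightarrow> (nat \<Rightarrow> int) \<Rightarrow> (nat \<Rightarrow>\<^sub>0 nat) \<Rightarrow> int" where
  "Lw n w f = (\<Sum>v\<in>{1..n}. int (Poly_Mapping.lookup f v) * w v)"

lemma J_conn_w:
  assumes po: "partial_order_on {1..n} R" and wp: "wprop n R w" and c3: "cond3 n R"
    and J: "J \<in> J_conn n R"
  shows "sum w J = 1"
proof -
  have oJ: "order_ideal n R J" and cJ: "hasse_connected R J" and ne: "J \<noteq> {}"
    using J unfolding J_conn_def by auto
  show ?thesis using w_comps[OF po wp c3 oJ] connected_comps[OF cJ ne] by simp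
qed

lemma DC:
  assumes po: "partial_order_on {1..n} R" and wp: "wprop n R w" and c3: "cond3 n R"
    and km: "Poly_Mapping.keys m \<subseteq> J_conn n R"
  shows "int (mdeg m) = Lw n w (Ec m)"
proof -
  have Jn1: "J \<subseteq> {1..n}" if "J \<in> Poly_Mapping.keys m" for J
    using km that unfolding J_conn_def order_ideal_def by auto
  have Jn: "J \<subseteq> {1..n}" "finite J" if "J \<in> Poly_Mapping.keys m" for J
    using Jn1[OF that] finite_subset[OF Jn1[OF that]] by auto
  have "Lw n w (Ec m) = (\<Sum>v\<in>{1..n}. \<Sum>J\<in>Poly_Mapping.keys m. (if v \<in> J then int (Poly_Mapping.lookup m J) * w v else 0))"
    unfolding Lw_def lookup_Ec
    by (intro sum.cong refl) (auto simp: sum_distrib_right Jn intro!: sum.cong)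
  also have "\<dots> = (\<Sum>J\<in>Poly_Mapping.keys m. \<Sum>v\<in>{1..n}. (if v \<in> J then int (Poly_Mapping.lookup m J) * w v else 0))"
    by (rule sum.swap)
  also have "\<dots> = (\<Sum>J\<in>Poly_Mapping.keys m. int (Poly_Mapping.lookup m J) * sum w J)"
  proof (intro sum.cong refl)
    fix J assume J: "J \<in> Poly_Mapping.keys m"
    have "(\<Sum>v\<in>{1..n}. (if v \<in> J then int (Poly_Mapping.lookup m J) * w v else 0))
        = (\<Sum>v\<in>{v\<in>{1..n}. v \<in> J}. int (Poly_Mapping.lookup m J) * w v)"
      by (rule sum.inter_filter[symmetric]) simp
    also have "{v\<in>{1..n}. v \<in> J} = J" using Jn[OF J] by auto
    finally show "(\<Sum>v\<in>{1..n}. (if v \<in> J then int (Poly_Mapping.lookup m J) * w v else 0))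
        = int (Poly_Mapping.lookup m J) * sum w J" by (simp add: sum_distrib_left)
  qed
  also have "\<dots> = (\<Sum>J\<in>Poly_Mapping.keys m. int (Poly_Mapping.lookup m J))"
    using J_conn_w[OF po wp c3] km by (intro sum.cong) auto
  also have "\<dots> = int (mdeg m)" unfolding mdeg_def by simp
  finally show ?thesis by simp
qed

lemma fiber:
  assumes "\<forall>m\<in>Poly_Mapping.keys g. int (mdeg m) = Lw n w (Ec m)"
  shows "Poly_Mapping.lookup (phi (hom_comp d g) :: (nat, 'k::comm_ring_1) mpoly) f
     = (if Lw n w f = int d then Poly_Mapping.lookup (phi g) f else 0)"
proof -
  have "Poly_Mapping.lookup (phi (hom_comp d g) :: (nat, 'k) mpoly) f
      = (\<Sum>m\<in>{m\<in>{m\<in>Poly_Mapping.keys g. mdeg m = d}. Ec m = f}. Poly_Mapping.lookup g m)"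
    unfolding lookup_phi keys_hom_comp by (intro sum.cong refl) (auto simp: lookup_hom_comp)
  also have "\<dots> = (if Lw n w f = int d then (\<Sum>m\<in>{m\<in>Poly_Mapping.keys g. Ec m = f}. Poly_Mapping.lookup g m) else 0)"
  proof (cases "Lw n w f = int d")
    case True
    have e: "{m\<in>{m\<in>Poly_Mapping.keys g. mdeg m = d}. Ec m = f} = {m\<in>Poly_Mapping.keys g. Ec m = f}"
      using assms True by auto
    show ?thesis by (simp only: e if_P[OF True])
  next
    case False
    have e: "{m\<in>{m\<in>Poly_Mapping.keys g. mdeg m = d}. Ec m = f} = {}"
      using assms False by auto
    show ?thesis by (simp only: e if_not_P[OF False] sum.empty)
  qed
  finally show ?thesis unfolding lookup_phi .
qed

lemma cond3_homog:
  assumes po: "partial_order_on {1..n} R" and c3: "cond3 n R"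
  shows "homogeneous_ideal (I_P n R :: (nat set, 'k::comm_ring_1) mpoly set)"
  unfolding homogeneous_ideal_def
proof (intro ballI allI)
  obtain w where wp: "wprop n R w" using w_exists[OF po] by blast
  fix g :: "(nat set, 'k) mpoly" and d assume g: "g \<in> I_P n R"
  then have gS: "g \<in> S_ring n R" and pg: "phi g = 0" unfolding I_P_def by auto
  have dc: "\<forall>m\<in>Poly_Mapping.keys g. int (mdeg m) = Lw n w (Ec m)"
    using DC[OF po wp c3] gS unfolding S_ring_def by auto
  have "phi (hom_comp d g) = (0 :: (nat, 'k) mpoly)"
    by (rule poly_mapping_eqI) (simp add: fiber[OF dc] pg)
  then show "hom_comp d g \<in> I_P n R" unfolding I_P_def using hom_comp_S[OF gS] by simp
qed




definition Mk :: "nat \<Rightarrow> nat rel \<Rightarrow> (nat \<Rightarrow> int) \<Rightarrow> nat \<Rightarrow> (nat, 'k::comm_ring_1) mpoly set" where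
  "Mk n R w k = {p. \<forall>f\<in>Poly_Mapping.keys p. weak_P_partition n R f \<and> Lw n w f \<ge> int k}"

lemma Lw_add: "Lw n w (f + g) = Lw n w f + Lw n w g"
  unfolding Lw_def by (simp add: lookup_add sum.distrib algebra_simps)

lemma Lw_zero [simp]: "Lw n w 0 = 0"
  unfolding Lw_def by simp

lemma weak_add:
  assumes "weak_P_partition n R f" "weak_P_partition n R g"
  shows "weak_P_partition n R (f + g)"
  using assms keys_add[of f g] unfolding weak_P_partition_def
  by (auto simp: lookup_add intro: add_mono)

lemma weak_zero [simp]: "weak_P_partition n R 0"
  unfolding weak_P_partition_def by simp

lemma weak_keys: "weak_P_partition n R f \<Longrightarrow> v \<notin> {1..n} \<Longrightarrow> Poly_Mapping.lookup f v = 0"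
  unfolding weak_P_partition_def by (auto simp: in_keys_iff)

lemma weak_level:
  assumes wf: "weak_P_partition n R f" and k: "1 \<le> k"
  shows "order_ideal n R {v\<in>{1..n}. k \<le> Poly_Mapping.lookup f v}"
  unfolding order_ideal_def
proof (intro conjI allI impI)
  show "{v\<in>{1..n}. k \<le> Poly_Mapping.lookup f v} \<subseteq> {1..n}" by auto
  fix i j assume h: "j \<in> {v\<in>{1..n}. k \<le> Poly_Mapping.lookup f v} \<and> (i, j) \<in> R"
  show "i \<in> {v\<in>{1..n}. k \<le> Poly_Mapping.lookup f v}"
  proof (cases "i = j")
    case True then show ?thesis using h by simp
  next
    case False
    then have "strict_le R i j" using h unfolding strict_le_def by simp
    then have "Poly_Mapping.lookup f i \<ge> Poly_Mapping.lookup f j" using wf unfolding weak_P_partition_def by blast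
    then have fi: "Poly_Mapping.lookup f i \<ge> k" using h by auto
    then have "i \<in> {1..n}" using weak_keys[OF wf, of i] k by (cases "i \<in> {1..n}") auto
    then show ?thesis using fi by simp
  qed
qed

lemma Lw_levels:
  assumes wf: "weak_P_partition n R f"
  defines "N \<equiv> (\<Sum>v\<in>{1..n}. Poly_Mapping.lookup f v)"
  shows "Lw n w f = (\<Sum>k\<in>{1..N}. sum w {v\<in>{1..n}. k \<le> Poly_Mapping.lookup f v})"
proof -
  have each: "int (Poly_Mapping.lookup f v) * w v = (\<Sum>k\<in>{1..N}. if k \<le> Poly_Mapping.lookup f v then w v else 0)"
    if v: "v \<in> {1..n}" for v
  proof -
    have le: "Poly_Mapping.lookup f v \<le> N" unfolding N_def using v by (intro member_le_sum) auto
    have "{k\<in>{1..N}. k \<le> Poly_Mapping.lookup f v} = {1..Poly_Mapping.lookup f v}" using le by auto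
    then have "(\<Sum>k\<in>{1..N}. if k \<le> Poly_Mapping.lookup f v then w v else 0) = (\<Sum>k\<in>{1..Poly_Mapping.lookup f v}. w v)"
      by (simp add: sum.inter_filter[symmetric])
    then show ?thesis by simp
  qed
  have "Lw n w f = (\<Sum>v\<in>{1..n}. \<Sum>k\<in>{1..N}. if k \<le> Poly_Mapping.lookup f v then w v else 0)"
    unfolding Lw_def using each by (intro sum.cong) auto
  also have "\<dots> = (\<Sum>k\<in>{1..N}. \<Sum>v\<in>{1..n}. if k \<le> Poly_Mapping.lookup f v then w v else 0)"
    by (rule sum.swap)
  also have "\<dots> = (\<Sum>k\<in>{1..N}. sum w {v\<in>{1..n}. k \<le> Poly_Mapping.lookup f v})"
    by (rule sum.cong[OF refl]) (rule sum.inter_filter[symmetric], simp)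
  finally show ?thesis .
qed

lemma Lw_nonneg_pos:
  assumes po: "partial_order_on {1..n} R" and wp: "wprop n R w" and c3: "cond3 n R"
    and wf: "weak_P_partition n R f"
  shows "Lw n w f \<ge> 0" "f \<noteq> 0 \<Longrightarrow> Lw n w f \<ge> 1"
proof -
  define N where "N = (\<Sum>v\<in>{1..n}. Poly_Mapping.lookup f v)"
  have L: "Lw n w f = (\<Sum>k\<in>{1..N}. sum w {v\<in>{1..n}. k \<le> Poly_Mapping.lookup f v})"
    unfolding N_def by (rule Lw_levels[OF wf])
  have t: "sum w {v\<in>{1..n}. k \<le> Poly_Mapping.lookup f v} = int (card (comps R {v\<in>{1..n}. k \<le> Poly_Mapping.lookup f v}))"
    if "k \<in> {1..N}" for k
    using w_comps[OF po wp c3 weak_level[OF wf]] that by auto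
  have nn: "\<forall>k\<in>{1..N}. 0 \<le> sum w {v\<in>{1..n}. k \<le> Poly_Mapping.lookup f v}" using t by simp
  show "Lw n w f \<ge> 0" unfolding L by (rule sum_nonneg) (use nn in blast)
  assume "f \<noteq> 0"
  then obtain v where v: "Poly_Mapping.lookup f v \<noteq> 0" by (metis poly_mapping_eqI lookup_zero)
  have vn: "v \<in> {1..n}" using weak_keys[OF wf, of v] v by auto
  have le: "Poly_Mapping.lookup f v \<le> N" unfolding N_def using vn by (intro member_le_sum) auto
  have N1: "1 \<in> {1..N}" using v le by auto
  let ?K = "{v\<in>{1..n}. 1 \<le> Poly_Mapping.lookup f v}"
  have "v \<in> ?K" using vn v by auto
  then have "comps R ?K \<noteq> {}" unfolding comps_def by auto
  moreover have "finite (comps R ?K)" by (intro finite_comps) auto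
  ultimately have "card (comps R ?K) \<ge> 1" by (simp add: Suc_le_eq card_gt_0_iff)
  then have "sum w ?K \<ge> 1" using t[OF N1] by simp
  moreover have "sum w ?K \<le> Lw n w f" unfolding L using nn N1
    by (intro member_le_sum[where i=1 and f="\<lambda>k. sum w {v\<in>{1..n}. k \<le> Poly_Mapping.lookup f v}"]) auto
  ultimately show "Lw n w f \<ge> 1" by simp
qed




abbreviation ind :: "nat set \<Rightarrow> (nat \<Rightarrow>\<^sub>0 nat)" where
  "ind J \<equiv> (\<Sum>j\<in>J. Poly_Mapping.single j 1)"

lemma split_weak:
  assumes po: "partial_order_on {1..n} R" and wf: "weak_P_partition n R f" and f0: "f \<noteq> 0"
  shows "\<exists>J\<in>J_conn n R. \<exists>g. weak_P_partition n R g \<and> f = ind J + g"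
proof -
  define K1 where "K1 = {v\<in>{1..n}. 1 \<le> Poly_Mapping.lookup f v}"
  have oK1: "order_ideal n R K1" unfolding K1_def by (rule weak_level[OF wf]) simp
  have finK1: "finite K1" by (rule order_ideal_finite[OF oK1])
  obtain a where a: "Poly_Mapping.lookup f a \<noteq> 0" using f0 by (metis poly_mapping_eqI lookup_zero)
  have an: "a \<in> {1..n}" using weak_keys[OF wf, of a] a by auto
  have aK: "a \<in> K1" unfolding K1_def using a an by auto
  define J where "J = reach R K1 a"
  have Jc: "J \<in> comps R K1" unfolding J_def comps_def using aK by auto
  have JJ: "J \<in> J_conn n R" by (rule comp_J_conn[OF po oK1 Jc])
  have JK: "J \<subseteq> K1" by (rule comps_sub[OF Jc])
  have finJ: "finite J" using finite_subset[OF JK finK1] .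
  have dJ: "dcl R J" using order_ideal_dcl comp_ideal[OF po oK1 Jc] by blast
  have tr: "trans R" and an': "antisym R" using po_facts[OF po] by auto
  have rfK: "\<forall>x\<in>K1. (x, x) \<in> R" using po_facts(3)[OF po] unfolding K1_def by auto
  have up: "j \<in> J" if "i \<in> J" "j \<in> K1" "(i, j) \<in> R" for i j
  proof -
    have iK: "i \<in> K1" using that JK by auto
    have "(a, i) \<in> (hasse_edges R K1)\<^sup>*" using that(1) unfolding J_def reach_def by auto
    moreover have "(i, j) \<in> (hasse_edges R K1)\<^sup>*" using chain_path[OF tr an' finK1 rfK iK that(2,3)] .
    ultimately have "(a, j) \<in> (hasse_edges R K1)\<^sup>*" by (rule rtrancl_trans)
    then show ?thesis using that(2) unfolding J_def reach_def by auto
  qed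
  define g where "g = f - ind J"
  have lg: "Poly_Mapping.lookup g v = Poly_Mapping.lookup f v - (if v \<in> J then 1 else 0)" for v
    unfolding g_def lookup_minus lookup_sum_single_set using finJ by simp
  have fJ: "v \<in> J \<Longrightarrow> Poly_Mapping.lookup f v \<ge> 1" for v using JK unfolding K1_def by auto
  have feq: "f = ind J + g"
  proof (rule poly_mapping_eqI)
    fix v show "Poly_Mapping.lookup f v = Poly_Mapping.lookup (ind J + g) v"
      unfolding lookup_add lg lookup_sum_single_set using finJ fJ[of v] by auto
  qed
  have wg: "weak_P_partition n R g" unfolding weak_P_partition_def
  proof (intro conjI allI impI)
    show "Poly_Mapping.keys g \<subseteq> {1..n}"
    proof
      fix v assume "v \<in> Poly_Mapping.keys g"
      then have "Poly_Mapping.lookup g v \<noteq> 0" by (simp add: in_keys_iff)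
      then have "Poly_Mapping.lookup f v \<noteq> 0" unfolding lg by auto
      then show "v \<in> {1..n}" using weak_keys[OF wf, of v] by auto
    qed
    fix i j assume s: "strict_le R i j"
    have fij: "Poly_Mapping.lookup f i \<ge> Poly_Mapping.lookup f j" using wf s unfolding weak_P_partition_def by blast
    have ij: "(i, j) \<in> R" using s unfolding strict_le_def by simp
    show "Poly_Mapping.lookup g i \<ge> Poly_Mapping.lookup g j"
    proof (cases "j \<in> J")
      case True
      then have "i \<in> J" using dJ ij unfolding dcl_def by blast
      then show ?thesis unfolding lg using True fij by auto
    next
      case jJ: False
      show ?thesis
      proof (cases "i \<in> J")
        case False then show ?thesis unfolding lg using jJ fij by auto
      next
        case iJ: True
        show ?thesis
        proof (cases "Poly_Mapping.lookup f j = 0")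
          case True then show ?thesis unfolding lg using jJ by auto
        next
          case False
          then have "j \<in> {1..n}" using weak_keys[OF wf, of j] by auto
          then have "j \<in> K1" unfolding K1_def using False by auto
          then have "j \<in> J" using up[OF iJ _ ij] by auto
          then show ?thesis using jJ by auto
        qed
      qed
    qed
  qed
  show ?thesis using JJ wg feq by blast
qed

lemma Lw_ind:
  assumes "J \<subseteq> {1..n}" "finite J"
  shows "Lw n w (ind J) = sum w J"
proof -
  have "Lw n w (ind J) = (\<Sum>v\<in>{1..n}. if v \<in> J then w v else 0)"
    unfolding Lw_def lookup_sum_single_set using assms(2) by (intro sum.cong) auto
  also have "\<dots> = sum w {v\<in>{1..n}. v \<in> J}" by (rule sum.inter_filter[symmetric]) simp
  also have "{v\<in>{1..n}. v \<in> J} = J" using assms(1) by auto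
  finally show ?thesis .
qed

lemma weak_ind:
  assumes "order_ideal n R J"
  shows "weak_P_partition n R (ind J)"
proof -
  have finJ: "finite J" using order_ideal_finite[OF assms] .
  have l: "Poly_Mapping.lookup (ind J) v = (if v \<in> J then 1 else 0)" for v
    using lookup_sum_single_set[where J=J and c=1 and v=v] finJ by simp
  show ?thesis unfolding weak_P_partition_def
  proof (intro conjI allI impI)
    show "Poly_Mapping.keys (ind J) \<subseteq> {1..n}"
    proof
      fix x assume "x \<in> Poly_Mapping.keys (ind J)"
      then have "Poly_Mapping.lookup (ind J) x \<noteq> 0" by (metis in_keys_iff)
      then have "x \<in> J" unfolding l by (auto split: if_splits)
      then show "x \<in> {1..n}" using assms unfolding order_ideal_def by auto
    qed
    fix i j assume "strict_le R i j"
    then have "(i, j) \<in> R" unfolding strict_le_def by simp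
    then show "Poly_Mapping.lookup (ind J) j \<le> Poly_Mapping.lookup (ind J) i"
      using assms unfolding order_ideal_def l by auto
  qed
qed

lemma pconst_mult_single: "pconst (c::'k::comm_ring_1) * Poly_Mapping.single f 1 = Poly_Mapping.single f c"
  unfolding pconst_def by (simp add: mult_single)

lemma sum_single_keys: "(\<Sum>f\<in>Poly_Mapping.keys p. Poly_Mapping.single f (Poly_Mapping.lookup p f)) = p"
  by (rule poly_mapping_eqI) (auto simp: lookup_sum lookup_single when_def sum.delta in_keys_iff)

lemma pmonom_inj: "pmonom f = (pmonom g :: ('v, 'k::comm_ring_1) mpoly) \<Longrightarrow> f = g"
  unfolding pmonom_def by (metis lookup_single_eq lookup_single_not_eq one_neq_zero)

lemma kspan_monos:
  "kspan {pmonom f | f. P f} = {p :: ('v, 'k::comm_ring_1) mpoly. \<forall>f\<in>Poly_Mapping.keys p. P f}"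
proof (intro equalityI subsetI)
  fix p :: "('v, 'k) mpoly" assume "p \<in> kspan {pmonom f | f. P f}"
  then obtain F c where F: "finite F" "F \<subseteq> {pmonom f | f. P f}" "p = (\<Sum>q\<in>F. pconst (c q) * q)"
    unfolding kspan_def by blast
  have "Poly_Mapping.keys p \<subseteq> (\<Union>q\<in>F. Poly_Mapping.keys (pconst (c q) * q))"
    unfolding F(3) by (rule keys_sum)
  also have "\<dots> \<subseteq> {f. P f}"
  proof
    fix x assume "x \<in> (\<Union>q\<in>F. Poly_Mapping.keys (pconst (c q) * q))"
    then obtain q where q: "q \<in> F" "x \<in> Poly_Mapping.keys (pconst (c q) * q)" by auto
    obtain f where f: "q = pmonom f" "P f" using F(2) q(1) by auto
    have "pconst (c q) * q = Poly_Mapping.single f (c q)" unfolding f(1) pmonom_def pconst_mult_single ..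
    then have "x = f" using q(2) by (auto split: if_splits)
    then show "x \<in> {f. P f}" using f by simp
  qed
  finally show "p \<in> {p. \<forall>f\<in>Poly_Mapping.keys p. P f}" by auto
next
  fix p :: "('v, 'k) mpoly" assume p: "p \<in> {p. \<forall>f\<in>Poly_Mapping.keys p. P f}"
  define c where "c q = Poly_Mapping.lookup p (SOME f. pmonom f = q)" for q :: "('v, 'k) mpoly"
  have inj: "inj_on (pmonom :: _ \<Rightarrow> ('v, 'k) mpoly) (Poly_Mapping.keys p)"
    by (rule inj_onI) (erule pmonom_inj)
  have cf: "c (pmonom f) = Poly_Mapping.lookup p f" for f
  proof -
    have "pmonom (SOME g. pmonom g = (pmonom f :: ('v,'k) mpoly)) = (pmonom f :: ('v,'k) mpoly)"
      by (rule someI) rule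
    then have "(SOME g. pmonom g = (pmonom f :: ('v,'k) mpoly)) = f" by (rule pmonom_inj)
    then show ?thesis unfolding c_def by simp
  qed
  have "(\<Sum>q\<in>pmonom ` Poly_Mapping.keys p. pconst (c q) * q) = (\<Sum>f\<in>Poly_Mapping.keys p. pconst (c (pmonom f)) * pmonom f)"
    using sum.reindex[OF inj, of "\<lambda>q. pconst (c q) * q"] by (simp add: comp_def)
  also have "\<dots> = p" unfolding cf unfolding pmonom_def pconst_mult_single by (rule sum_single_keys)
  finally have "p = (\<Sum>q\<in>pmonom ` Poly_Mapping.keys p. pconst (c q) * q)" by simp
  moreover have "pmonom ` Poly_Mapping.keys p \<subseteq> {pmonom f | f. P f}" using p by auto
  ultimately show "p \<in> kspan {pmonom f | f. P f}" unfolding kspan_def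
    by (intro CollectI exI[of _ "pmonom ` Poly_Mapping.keys p"] exI[of _ c] conjI) auto
qed

lemma sp_zero: "0 \<in> set_prod A B"
  unfolding set_prod_def by (rule CollectI, rule exI[of _ "[]"]) simp

lemma sp_add: "x \<in> set_prod A B \<Longrightarrow> y \<in> set_prod A B \<Longrightarrow> x + y \<in> set_prod A B"
  unfolding set_prod_def
proof -
  assume "x \<in> {sum_list (map (\<lambda>(a, b). a * b) xs) |xs. set xs \<subseteq> A \<times> B}"
    "y \<in> {sum_list (map (\<lambda>(a, b). a * b) xs) |xs. set xs \<subseteq> A \<times> B}"
  then obtain xs ys where "x = sum_list (map (\<lambda>(a, b). a * b) xs)" "set xs \<subseteq> A \<times> B"
    "y = sum_list (map (\<lambda>(a, b). a * b) ys)" "set ys \<subseteq> A \<times> B" by blast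
  then show "x + y \<in> {sum_list (map (\<lambda>(a, b). a * b) xs) |xs. set xs \<subseteq> A \<times> B}"
    by (intro CollectI exI[of _ "xs @ ys"]) simp
qed

lemma sp_mult: "a \<in> A \<Longrightarrow> b \<in> B \<Longrightarrow> a * b \<in> set_prod A B"
  unfolding set_prod_def by (intro CollectI exI[of _ "[(a, b)]"]) simp

lemma sp_sum: "finite S \<Longrightarrow> (\<And>s. s \<in> S \<Longrightarrow> f s \<in> set_prod A B) \<Longrightarrow> (\<Sum>s\<in>S. f s) \<in> set_prod A B"
proof (induction S rule: finite_induct)
  case empty then show ?case using sp_zero by simp
next
  case (insert s S)
  have "f s \<in> set_prod A B" "sum f S \<in> set_prod A B" using insert by auto
  then show ?case using sp_add[of "f s" A B "sum f S"] insert(1,2) by simp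
qed

lemma sp_sub:
  assumes "\<And>a b. a \<in> A \<Longrightarrow> b \<in> B \<Longrightarrow> a * b \<in> X" "0 \<in> X" "\<And>x y. x \<in> X \<Longrightarrow> y \<in> X \<Longrightarrow> x + y \<in> X"
  shows "set_prod A B \<subseteq> X"
proof
  fix z assume "z \<in> set_prod A B"
  then obtain xs where z: "z = sum_list (map (\<lambda>(a, b). a * b) xs)" "set xs \<subseteq> A \<times> B"
    unfolding set_prod_def by blast
  have "set xs \<subseteq> A \<times> B \<Longrightarrow> sum_list (map (\<lambda>(a, b). a * b) xs) \<in> X"
  proof (induction xs)
    case Nil then show ?case using assms(2) by simp
  next
    case (Cons p xs)
    obtain a b where p: "p = (a, b)" by (cases p)
    have "a * b \<in> X" using Cons.prems p by (intro assms(1)) auto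
    moreover have "sum_list (map (\<lambda>(a, b). a * b) xs) \<in> X" using Cons by simp
    ultimately show ?case using assms(3) p by simp
  qed
  then show "z \<in> X" using z by simp
qed

lemma Mk_zero [simp]: "0 \<in> Mk n R w k"
  unfolding Mk_def by simp

lemma Mk_add: "p \<in> Mk n R w k \<Longrightarrow> q \<in> Mk n R w k \<Longrightarrow> p + q \<in> Mk n R w k"
proof -
  assume p: "p \<in> Mk n R w k" and q: "q \<in> Mk n R w k"
  show ?thesis unfolding Mk_def
  proof (rule CollectI, rule ballI)
    fix f assume "f \<in> Poly_Mapping.keys (p + q)"
    then have "f \<in> Poly_Mapping.keys p \<or> f \<in> Poly_Mapping.keys q" using keys_add[of p q] by auto
    then show "weak_P_partition n R f \<and> int k \<le> Lw n w f" using p q unfolding Mk_def by auto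
  qed
qed

lemma Mk_uminus: "p \<in> Mk n R w k \<Longrightarrow> - p \<in> Mk n R w k"
  unfolding Mk_def by simp

lemma Mk_diff: "p \<in> Mk n R w k \<Longrightarrow> q \<in> Mk n R w k \<Longrightarrow> p - q \<in> Mk n R w k"
  using Mk_add[OF _ Mk_uminus, of p n R w k q] by simp

lemma Mk_mono: "k \<le> j \<Longrightarrow> p \<in> Mk n R w j \<Longrightarrow> p \<in> Mk n R w k"
proof -
  assume kj: "k \<le> j" and p: "p \<in> Mk n R w j"
  have "int k \<le> int j" using kj by simp
  then show ?thesis using p unfolding Mk_def by fastforce
qed

lemma Mk_mult:
  assumes "p \<in> Mk n R w i" "q \<in> Mk n R w j" shows "p * q \<in> Mk n R w (i + j)"
  unfolding Mk_def
proof (rule CollectI, rule ballI)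
  fix f assume "f \<in> Poly_Mapping.keys (p * q)"
  then obtain a b where ab: "f = a + b" "a \<in> Poly_Mapping.keys p" "b \<in> Poly_Mapping.keys q"
    using keys_mult[of p q] by blast
  then show "weak_P_partition n R f \<and> int (i + j) \<le> Lw n w f"
  proof -
    have "weak_P_partition n R a" "int i \<le> Lw n w a" using assms(1) ab(2) unfolding Mk_def by auto
    moreover have "weak_P_partition n R b" "int j \<le> Lw n w b" using assms(2) ab(3) unfolding Mk_def by auto
    ultimately show ?thesis unfolding ab(1) Lw_add by (auto intro: weak_add)
  qed
qed

lemma Mk_single: "weak_P_partition n R f \<Longrightarrow> Lw n w f \<ge> int k \<Longrightarrow> Poly_Mapping.single f c \<in> Mk n R w k"
  unfolding Mk_def by simp

lemma Mk_sum: "finite S \<Longrightarrow> (\<And>s. s \<in> S \<Longrightarrow> f s \<in> Mk n R w k) \<Longrightarrow> (\<Sum>s\<in>S. f s) \<in> Mk n R w k"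
proof (induction S rule: finite_induct)
  case empty then show ?case by simp
next
  case (insert s S)
  have "f s \<in> Mk n R w k" "sum f S \<in> Mk n R w k" using insert by auto
  then show ?case using Mk_add[of "f s" n R w k "sum f S"] insert(1,2) by simp
qed

lemma mpow_eq:
  assumes po: "partial_order_on {1..n} R" and wp: "wprop n R w" and c3: "cond3 n R"
  shows "(mpow n R k :: (nat, 'k::comm_ring_1) mpoly set) = Mk n R w k"
proof (induction k)
  case 0
  show ?case unfolding mpow.simps R_P_def kspan_monos Mk_def
    using Lw_nonneg_pos(1)[OF po wp c3] by auto
next
  case (Suc k)
  have mi: "(max_ideal n R :: (nat, 'k) mpoly set) = Mk n R w 1"
    unfolding max_ideal_def kspan_monos Mk_def
    using Lw_nonneg_pos(2)[OF po wp c3] by (auto simp: Lw_zero)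
  have "set_prod (Mk n R w 1) (Mk n R w k) = (Mk n R w (Suc k) :: (nat, 'k) mpoly set)"
  proof
    show "set_prod (Mk n R w 1) (Mk n R w k) \<subseteq> (Mk n R w (Suc k) :: (nat, 'k) mpoly set)"
    proof (rule sp_sub)
      fix a b :: "(nat, 'k) mpoly" assume "a \<in> Mk n R w 1" "b \<in> Mk n R w k"
      then show "a * b \<in> Mk n R w (Suc k)" using Mk_mult[of a n R w 1 b k] by simp
    next
      show "0 \<in> (Mk n R w (Suc k) :: (nat, 'k) mpoly set)" by simp
    next
      fix x y :: "(nat, 'k) mpoly" assume "x \<in> Mk n R w (Suc k)" "y \<in> Mk n R w (Suc k)"
      then show "x + y \<in> Mk n R w (Suc k)" by (rule Mk_add)
    qed
    show "(Mk n R w (Suc k) :: (nat, 'k) mpoly set) \<subseteq> set_prod (Mk n R w 1) (Mk n R w k)"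
    proof
      fix p :: "(nat, 'k) mpoly" assume p: "p \<in> Mk n R w (Suc k)"
      have "Poly_Mapping.single f (Poly_Mapping.lookup p f) \<in> set_prod (Mk n R w 1) (Mk n R w k)"
        if f: "f \<in> Poly_Mapping.keys p" for f
      proof -
        have wf: "weak_P_partition n R f" and Lf: "Lw n w f \<ge> int (Suc k)" using p f unfolding Mk_def by auto
        have f0: "f \<noteq> 0" using Lf by auto
        obtain J g where J: "J \<in> J_conn n R" and wg: "weak_P_partition n R g" and fe: "f = ind J + g"
          using split_weak[OF po wf f0] by blast
        have oJ: "order_ideal n R J" using J unfolding J_conn_def by auto
        have LJ: "Lw n w (ind J) = 1"
          using Lw_ind[OF order_ideal_sub[OF oJ] order_ideal_finite[OF oJ]] J_conn_w[OF po wp c3 J] by simp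
        have Lg: "Lw n w g \<ge> int k" using Lf LJ unfolding fe Lw_add by simp
        have "Poly_Mapping.single f (Poly_Mapping.lookup p f) = Poly_Mapping.single (ind J) 1 * Poly_Mapping.single g (Poly_Mapping.lookup p f)"
          unfolding fe by (simp add: mult_single)
        moreover have "Poly_Mapping.single (ind J) (1::'k) \<in> Mk n R w 1" using weak_ind[OF oJ] LJ by (intro Mk_single) auto
        moreover have "Poly_Mapping.single g (Poly_Mapping.lookup p f) \<in> Mk n R w k" using wg Lg by (intro Mk_single)
        ultimately show ?thesis by (simp add: sp_mult)
      qed
      then have "(\<Sum>f\<in>Poly_Mapping.keys p. Poly_Mapping.single f (Poly_Mapping.lookup p f)) \<in> set_prod (Mk n R w 1) (Mk n R w k)"
        by (intro sp_sum) auto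
      then show "p \<in> set_prod (Mk n R w 1) (Mk n R w k)" unfolding sum_single_keys .
    qed
  qed
  then show ?case unfolding mpow.simps mi Suc.IH .
qed




lemma gcos_zeroD:
  assumes "0 \<in> M (Suc d)" "gcos M d x = gcos M d 0"
  shows "x \<in> M (Suc d)"
proof -
  have "x \<in> gcos M d x" using assms(1) unfolding gcos_def by (intro CollectI exI[of _ 0]) simp
  then have "x \<in> gcos M d 0" using assms(2) by simp
  then show ?thesis unfolding gcos_def by auto
qed

lemma I_gr_eq:
  assumes po: "partial_order_on {1..n} R" and c3: "cond3 n R"
  shows "(I_gr_P n R :: (nat set, 'k::comm_ring_1) mpoly set) = I_P n R"
proof -
  obtain w where wp: "wprop n R w" using w_exists[OF po] by blast
  have hom: "homogeneous_ideal (I_P n R :: (nat set, 'k) mpoly set)" by (rule cond3_homog[OF po c3])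
  have mp: "(mpow n R k :: (nat, 'k) mpoly set) = Mk n R w k" for k by (rule mpow_eq[OF po wp c3])
  show ?thesis
  proof (intro equalityI subsetI)
    fix g :: "(nat set, 'k) mpoly" assume g: "g \<in> I_gr_P n R"
    then have gS: "g \<in> S_ring n R" and gz: "gr_phi n R g = (\<lambda>i. gcos (mpow n R) i 0)"
      unfolding I_gr_P_def gr_zero by auto
    have dc: "\<forall>m\<in>Poly_Mapping.keys g. int (mdeg m) = Lw n w (Ec m)"
      using DC[OF po wp c3] gS unfolding S_ring_def by auto
    have pd: "phi (hom_comp d g) = (0 :: (nat, 'k) mpoly)" for d
    proof -
      have mpf: "(mpow n R :: nat \<Rightarrow> (nat, 'k) mpoly set) = Mk n R w" by (rule ext) (rule mp)
      have "gcos (mpow n R) d (phi (hom_comp d g)) = gcos (mpow n R) d (0 :: (nat, 'k) mpoly)"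
        using fun_cong[OF gz, of d] unfolding gr_phi_def .
      then have "gcos (Mk n R w) d (phi (hom_comp d g)) = gcos (Mk n R w) d (0 :: (nat, 'k) mpoly)"
        unfolding mpf .
      then have inM: "phi (hom_comp d g) \<in> Mk n R w (Suc d)" by (rule gcos_zeroD[OF Mk_zero])
      show ?thesis
      proof (rule poly_mapping_eqI)
        fix f
        show "Poly_Mapping.lookup (phi (hom_comp d g) :: (nat, 'k) mpoly) f = Poly_Mapping.lookup 0 f"
        proof (rule ccontr)
          assume ne: "Poly_Mapping.lookup (phi (hom_comp d g) :: (nat, 'k) mpoly) f \<noteq> Poly_Mapping.lookup 0 f"
          then have "f \<in> Poly_Mapping.keys (phi (hom_comp d g) :: (nat, 'k) mpoly)" by (simp add: in_keys_iff)
          then have "Lw n w f \<ge> int (Suc d)" using inM unfolding Mk_def by auto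
          moreover have "Lw n w f = int d" using ne fiber[OF dc, of d f] by (auto split: if_splits)
          ultimately show False by simp
        qed
      qed
    qed
    have "phi g = (0 :: (nat, 'k) mpoly)"
    proof (rule poly_mapping_eqI)
      fix f
      show "Poly_Mapping.lookup (phi g :: (nat, 'k) mpoly) f = Poly_Mapping.lookup 0 f"
      proof (cases "Lw n w f \<ge> 0")
        case True
        then have "Lw n w f = int (nat (Lw n w f))" by simp
        then show ?thesis using fiber[OF dc, of "nat (Lw n w f)" f] pd[of "nat (Lw n w f)"] by simp
      next
        case False
        have e: "{m\<in>Poly_Mapping.keys g. Ec m = f} = {}" using dc False by force
        show ?thesis unfolding lookup_phi e by simp
      qed
    qed
    then show "g \<in> I_P n R" unfolding I_P_def using gS by simp
  next
    fix g :: "(nat set, 'k) mpoly" assume g: "g \<in> I_P n R"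
    then have gS: "g \<in> S_ring n R" unfolding I_P_def by simp
    have "phi (hom_comp d g) = (0 :: (nat, 'k) mpoly)" for d
      using hom g unfolding homogeneous_ideal_def I_P_def by blast
    then have "gr_phi n R g = (\<lambda>i. gcos (mpow n R) i 0)" unfolding gr_phi_def by simp
    then show "g \<in> I_gr_P n R" unfolding I_gr_P_def gr_zero using gS by simp
  qed
qed




definition proj :: "nat \<Rightarrow> (nat \<Rightarrow> int) \<Rightarrow> nat \<Rightarrow> (nat, 'k::comm_ring_1) mpoly \<Rightarrow> (nat, 'k) mpoly" where
  "proj n w d p = (\<Sum>f\<in>{f\<in>Poly_Mapping.keys p. Lw n w f = int d}. Poly_Mapping.single f (Poly_Mapping.lookup p f))"

definition homog :: "nat \<Rightarrow> (nat \<Rightarrow> int) \<Rightarrow> nat \<Rightarrow> (nat, 'k::comm_ring_1) mpoly \<Rightarrow> bool" where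
  "homog n w d x \<longleftrightarrow> (\<forall>f\<in>Poly_Mapping.keys x. Lw n w f = int d)"

lemma lookup_proj:
  "Poly_Mapping.lookup (proj n w d p) f = (if Lw n w f = int d then Poly_Mapping.lookup p f else 0)"
  unfolding proj_def lookup_sum lookup_single
  by (auto simp: when_def sum.inter_filter in_keys_iff sum.delta)

lemma proj_add: "proj n w d (x + y) = proj n w d x + proj n w d y"
  by (rule poly_mapping_eqI) (simp add: lookup_proj lookup_add)

lemma proj_diff: "proj n w d (x - y) = proj n w d x - proj n w d y"
  by (rule poly_mapping_eqI) (simp add: lookup_proj lookup_minus)

lemma proj_zero [simp]: "proj n w d 0 = 0"
  by (rule poly_mapping_eqI) (simp add: lookup_proj)

lemma proj_sum: "finite S \<Longrightarrow> proj n w d (\<Sum>i\<in>S. x i) = (\<Sum>i\<in>S. proj n w d (x i))"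
  by (induction S rule: finite_induct) (auto simp: proj_add)

lemma homog_proj: "homog n w d (proj n w d x)"
  unfolding homog_def by (auto simp: in_keys_iff lookup_proj split: if_splits)

lemma proj_homog:
  assumes "homog n w e x" shows "proj n w d x = (if d = e then x else 0)"
proof (rule poly_mapping_eqI)
  fix f
  show "Poly_Mapping.lookup (proj n w d x) f = Poly_Mapping.lookup (if d = e then x else 0) f"
  proof (cases "f \<in> Poly_Mapping.keys x")
    case True
    then have "Lw n w f = int e" using assms unfolding homog_def by auto
    then show ?thesis by (simp add: lookup_proj)
  next
    case False
    then have "Poly_Mapping.lookup x f = 0" by (simp add: in_keys_iff)
    then show ?thesis by (simp add: lookup_proj)
  qed
qed

lemma proj_proj: "proj n w d (proj n w i x) = (if d = i then proj n w i x else 0)"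
  by (rule proj_homog[OF homog_proj])

lemma homog_mult:
  assumes "homog n w i a" "homog n w j b" shows "homog n w (i + j) (a * b)"
  unfolding homog_def
proof
  fix f assume "f \<in> Poly_Mapping.keys (a * b)"
  then obtain x y where "f = x + y" "x \<in> Poly_Mapping.keys a" "y \<in> Poly_Mapping.keys b"
    using keys_mult[of a b] by blast
  then show "Lw n w f = int (i + j)" using assms unfolding homog_def by (simp add: Lw_add)
qed

lemma proj_Mk_Suc:
  assumes "x \<in> Mk n R w (Suc d)" shows "proj n w d x = 0"
proof (rule poly_mapping_eqI)
  fix f
  show "Poly_Mapping.lookup (proj n w d x) f = Poly_Mapping.lookup 0 f"
  proof (cases "f \<in> Poly_Mapping.keys x")
    case True
    then have "Lw n w f \<ge> int (Suc d)" using assms unfolding Mk_def by auto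
    then show ?thesis by (simp add: lookup_proj)
  next
    case False
    then show ?thesis by (simp add: lookup_proj in_keys_iff)
  qed
qed

lemma proj_in_Mk:
  assumes "x \<in> Mk n R w 0" shows "proj n w d x \<in> Mk n R w d"
  unfolding Mk_def
proof (rule CollectI, rule ballI)
  fix f assume f: "f \<in> Poly_Mapping.keys (proj n w d x)"
  then have "Poly_Mapping.lookup (proj n w d x) f \<noteq> 0" by (simp add: in_keys_iff)
  then have "Lw n w f = int d" "f \<in> Poly_Mapping.keys x" by (auto simp: lookup_proj in_keys_iff split: if_splits)
  then show "weak_P_partition n R f \<and> int d \<le> Lw n w f" using assms unfolding Mk_def by auto
qed

lemma Mk_proj_zero:
  assumes "x \<in> Mk n R w d" "proj n w d x = 0" shows "x \<in> Mk n R w (Suc d)"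
  unfolding Mk_def
proof (rule CollectI, rule ballI)
  fix f assume f: "f \<in> Poly_Mapping.keys x"
  have "Lw n w f \<noteq> int d"
  proof
    assume "Lw n w f = int d"
    then have "Poly_Mapping.lookup (proj n w d x) f = Poly_Mapping.lookup x f" by (simp add: lookup_proj)
    then show False using assms(2) f by (simp add: in_keys_iff)
  qed
  then show "weak_P_partition n R f \<and> int (Suc d) \<le> Lw n w f" using assms(1) f unfolding Mk_def by auto
qed

lemma Mk_unique:
  assumes "p \<in> Mk n R w 0" "q \<in> Mk n R w 0" "\<And>d. proj n w d p = proj n w d q"
  shows "p = q"
proof (rule poly_mapping_eqI)
  fix f
  show "Poly_Mapping.lookup p f = Poly_Mapping.lookup q f"
  proof (cases "f \<in> Poly_Mapping.keys p \<union> Poly_Mapping.keys q")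
    case True
    then have "Lw n w f \<ge> 0" using assms(1,2) unfolding Mk_def by auto
    then have e: "Lw n w f = int (nat (Lw n w f))" by simp
    have "Poly_Mapping.lookup (proj n w (nat (Lw n w f)) p) f = Poly_Mapping.lookup (proj n w (nat (Lw n w f)) q) f"
      using assms(3) by simp
    then show ?thesis using e by (simp add: lookup_proj)
  next
    case False
    then show ?thesis by (simp add: in_keys_iff)
  qed
qed

lemma proj_mult:
  assumes a: "a \<in> Mk n R w i" and b: "b \<in> Mk n R w j"
  shows "proj n w (i + j) (a * b) = proj n w i a * proj n w j b"
proof -
  define pa where "pa = proj n w i a"
  define pb where "pb = proj n w j b"
  have a0: "a \<in> Mk n R w 0" using Mk_mono[OF _ a] by simp
  have b0: "b \<in> Mk n R w 0" using Mk_mono[OF _ b] by simp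
  have pai: "pa \<in> Mk n R w i" unfolding pa_def by (rule proj_in_Mk[OF a0])
  have pbj: "pb \<in> Mk n R w j" unfolding pb_def by (rule proj_in_Mk[OF b0])
  have a': "a - pa \<in> Mk n R w (Suc i)"
  proof (rule Mk_proj_zero)
    show "a - pa \<in> Mk n R w i" using Mk_diff[OF a pai] .
    show "proj n w i (a - pa) = 0" unfolding proj_diff pa_def proj_proj by simp
  qed
  have b': "b - pb \<in> Mk n R w (Suc j)"
  proof (rule Mk_proj_zero)
    show "b - pb \<in> Mk n R w j" using Mk_diff[OF b pbj] .
    show "proj n w j (b - pb) = 0" unfolding proj_diff pb_def proj_proj by simp
  qed
  have eq: "a * b = pa * pb + pa * (b - pb) + (a - pa) * b" by (simp add: algebra_simps)
  have t2: "pa * (b - pb) \<in> Mk n R w (Suc (i + j))" using Mk_mult[OF pai b'] by simp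
  have t3: "(a - pa) * b \<in> Mk n R w (Suc (i + j))" using Mk_mult[OF a' b] by simp
  have hpp: "homog n w (i + j) (pa * pb)" unfolding pa_def pb_def by (intro homog_mult homog_proj)
  have "proj n w (i + j) (a * b) = pa * pb"
    unfolding eq proj_add proj_Mk_Suc[OF t2] proj_Mk_Suc[OF t3] proj_homog[OF hpp] by simp
  then show ?thesis unfolding pa_def pb_def .
qed

lemma gcos_self: "a \<in> gcos (Mk n R w) d a"
  unfolding gcos_def by (intro CollectI exI[of _ 0]) simp

lemma grep_gcos: "\<exists>b\<in>Mk n R w (Suc d). grep (gcos (Mk n R w) d a) = a + b"
proof -
  have "grep (gcos (Mk n R w) d a) \<in> gcos (Mk n R w) d a"
    unfolding grep_def by (rule someI[where P="\<lambda>x. x \<in> gcos (Mk n R w) d a", OF gcos_self])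
  then show ?thesis unfolding gcos_def by auto
qed

lemma gcos_eqI:
  assumes "a - a' \<in> Mk n R w (Suc d)"
  shows "gcos (Mk n R w) d a = gcos (Mk n R w) d a'"
  unfolding gcos_def
proof (intro equalityI subsetI)
  fix x assume "x \<in> {a + b |b. b \<in> Mk n R w (Suc d)}"
  then obtain b where b: "x = a + b" "b \<in> Mk n R w (Suc d)" by auto
  have "a - a' + b \<in> Mk n R w (Suc d)" using Mk_add[OF assms b(2)] .
  moreover have "x = a' + (a - a' + b)" using b(1) by simp
  ultimately show "x \<in> {a' + b |b. b \<in> Mk n R w (Suc d)}" by blast
next
  fix x assume "x \<in> {a' + b |b. b \<in> Mk n R w (Suc d)}"
  then obtain b where b: "x = a' + b" "b \<in> Mk n R w (Suc d)" by auto
  have "b - (a - a') \<in> Mk n R w (Suc d)" using Mk_diff[OF b(2) assms] .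
  moreover have "x = a + (b - (a - a'))" using b(1) by simp
  ultimately show "x \<in> {a + b |b. b \<in> Mk n R w (Suc d)}" by blast
qed




definition hmap :: "nat \<Rightarrow> nat rel \<Rightarrow> (nat \<Rightarrow> int) \<Rightarrow> (nat \<Rightarrow> (nat, 'k::comm_ring_1) mpoly set) \<Rightarrow> (nat, 'k) mpoly" where
  "hmap n R w F = (\<Sum>i\<in>{i. F i \<noteq> gcos (Mk n R w) i 0}. proj n w i (grep (F i)))"

lemma car_iff:
  "F \<in> carrier (gr_ring (Mk n R w)) \<longleftrightarrow>
    (\<forall>i. \<exists>a\<in>Mk n R w i. F i = gcos (Mk n R w) i a) \<and> finite {i. F i \<noteq> gcos (Mk n R w) i 0}"
  unfolding gr_ring_def by simp

lemma A_mem: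
  fixes F :: "nat \<Rightarrow> (nat, 'k::comm_ring_1) mpoly set"
  assumes "F \<in> carrier (gr_ring (Mk n R w))" shows "grep (F i) \<in> Mk n R w i"
proof -
  obtain a where a: "a \<in> Mk n R w i" "F i = gcos (Mk n R w) i a" using assms unfolding car_iff by blast
  obtain b :: "(nat, 'k) mpoly" where b: "b \<in> Mk n R w (Suc i)" "grep (gcos (Mk n R w) i a) = a + b" using grep_gcos by blast
  have "b \<in> Mk n R w i" using Mk_mono[OF _ b(1)] by simp
  then show ?thesis using a(2) b(2) Mk_add[OF a(1)] by simp
qed

lemma A_eq:
  fixes F :: "nat \<Rightarrow> (nat, 'k::comm_ring_1) mpoly set"
  assumes "F \<in> carrier (gr_ring (Mk n R w))" shows "F i = gcos (Mk n R w) i (grep (F i))"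
proof -
  obtain a where a: "a \<in> Mk n R w i" "F i = gcos (Mk n R w) i a" using assms unfolding car_iff by blast
  obtain b :: "(nat, 'k) mpoly" where b: "b \<in> Mk n R w (Suc i)" "grep (gcos (Mk n R w) i a) = a + b" using grep_gcos by blast
  have "a - (a + b) \<in> Mk n R w (Suc i)" using Mk_uminus[OF b(1)] by simp
  then have "gcos (Mk n R w) i a = gcos (Mk n R w) i (a + b)" by (rule gcos_eqI)
  then show ?thesis using a(2) b(2) by simp
qed

lemma A_out:
  fixes F :: "nat \<Rightarrow> (nat, 'k::comm_ring_1) mpoly set"
  assumes "F i = gcos (Mk n R w) i 0" shows "grep (F i) \<in> Mk n R w (Suc i)"
proof -
  obtain b :: "(nat, 'k) mpoly" where b: "b \<in> Mk n R w (Suc i)" "grep (gcos (Mk n R w) i 0) = 0 + b" using grep_gcos by blast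
  have "grep (F i) = b" using assms b(2) by simp
  then show ?thesis using b(1) by simp
qed

lemma h_T:
  assumes F: "F \<in> carrier (gr_ring (Mk n R w))" and T: "finite T" "{i. F i \<noteq> gcos (Mk n R w) i 0} \<subseteq> T"
  shows "hmap n R w F = (\<Sum>i\<in>T. proj n w i (grep (F i)))"
  unfolding hmap_def
proof (rule sum.mono_neutral_left[OF T])
  show "\<forall>i\<in>T - {i. F i \<noteq> gcos (Mk n R w) i 0}. proj n w i (grep (F i)) = 0"
  proof
    fix i assume "i \<in> T - {i. F i \<noteq> gcos (Mk n R w) i 0}"
    then have "F i = gcos (Mk n R w) i 0" by simp
    then show "proj n w i (grep (F i)) = 0" by (rule proj_Mk_Suc[OF A_out])
  qed
qed

lemma h_Mk0:
  assumes F: "F \<in> carrier (gr_ring (Mk n R w))" shows "hmap n R w F \<in> Mk n R w 0"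
  unfolding hmap_def
proof (rule Mk_sum)
  show "finite {i. F i \<noteq> gcos (Mk n R w) i 0}" using F unfolding car_iff by blast
  fix i
  have "grep (F i) \<in> Mk n R w 0" using Mk_mono[OF _ A_mem[OF F]] by simp
  then have "proj n w i (grep (F i)) \<in> Mk n R w i" by (rule proj_in_Mk)
  then show "proj n w i (grep (F i)) \<in> Mk n R w 0" using Mk_mono[of 0 i] by simp
qed

lemma h_proj:
  assumes F: "F \<in> carrier (gr_ring (Mk n R w))" shows "proj n w d (hmap n R w F) = proj n w d (grep (F d))"
proof -
  let ?S = "{i. F i \<noteq> gcos (Mk n R w) i 0}"
  have fS: "finite ?S" using F unfolding car_iff by blast
  have "hmap n R w F = (\<Sum>i\<in>insert d ?S. proj n w i (grep (F i)))"
    by (rule h_T[OF F]) (use fS in auto)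
  then have "proj n w d (hmap n R w F) = (\<Sum>i\<in>insert d ?S. if d = i then proj n w i (grep (F i)) else 0)"
    using fS by (simp add: proj_sum proj_proj)
  also have "\<dots> = proj n w d (grep (F d))" using fS by (simp add: sum.delta)
  finally show ?thesis .
qed

lemma proj_grep_gcos:
  fixes a :: "(nat, 'k::comm_ring_1) mpoly"
  shows "proj n w d (grep (gcos (Mk n R w) d a)) = proj n w d a"
proof -
  obtain b :: "(nat, 'k) mpoly" where b: "b \<in> Mk n R w (Suc d)" "grep (gcos (Mk n R w) d a) = a + b" using grep_gcos by blast
  then show ?thesis by (simp add: proj_add proj_Mk_Suc)
qed

lemma bounded_supp:
  assumes F: "F \<in> carrier (gr_ring (Mk n R w))"
  obtains N where "\<And>i. i \<ge> N \<Longrightarrow> F i = gcos (Mk n R w) i 0"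
proof -
  have "finite {i. F i \<noteq> gcos (Mk n R w) i 0}" using F unfolding car_iff by blast
  then obtain N where N: "\<forall>i\<in>{i. F i \<noteq> gcos (Mk n R w) i 0}. i < N" using finite_nat_set_iff_bounded by blast
  have "F i = gcos (Mk n R w) i 0" if "i \<ge> N" for i using N that by (meson leD mem_Collect_eq)
  then show ?thesis by (rule that)
qed

lemma gr_mult_eq:
  "(F \<otimes>\<^bsub>gr_ring M\<^esub> G) = (\<lambda>d. gcos M d (\<Sum>i\<le>d. grep (F i) * grep (G (d - i))))"
  unfolding gr_ring_def by simp

lemma gr_add_eq:
  "(F \<oplus>\<^bsub>gr_ring M\<^esub> G) = (\<lambda>i. gcos M i (grep (F i) + grep (G i)))"
  unfolding gr_ring_def by simp

lemma gr_one_eq: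
  "\<one>\<^bsub>gr_ring M\<^esub> = gr_const M 1"
  unfolding gr_ring_def gr_const_def pconst_def by (auto simp: fun_eq_iff)

lemma mult_car:
  assumes F: "F \<in> carrier (gr_ring (Mk n R w))" and G: "G \<in> carrier (gr_ring (Mk n R w))"
  shows "(\<lambda>d. gcos (Mk n R w) d (\<Sum>i\<le>d. grep (F i) * grep (G (d - i)))) \<in> carrier (gr_ring (Mk n R w))"
proof -
  obtain NF where NF: "\<And>i. i \<ge> NF \<Longrightarrow> F i = gcos (Mk n R w) i 0" using bounded_supp[OF F] by blast
  obtain NG where NG: "\<And>i. i \<ge> NG \<Longrightarrow> G i = gcos (Mk n R w) i 0" using bounded_supp[OF G] by blast
  have inM: "(\<Sum>i\<le>d. grep (F i) * grep (G (d - i))) \<in> Mk n R w d" for d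
  proof (rule Mk_sum)
    fix i assume "i \<in> {..d}"
    then have "i + (d - i) = d" by simp
    then show "grep (F i) * grep (G (d - i)) \<in> Mk n R w d"
      using Mk_mult[OF A_mem[OF F] A_mem[OF G], of i "d - i"] by simp
  qed simp
  have out: "(\<Sum>i\<le>d. grep (F i) * grep (G (d - i))) \<in> Mk n R w (Suc d)" if d: "d \<ge> NF + NG" for d
  proof (rule Mk_sum)
    fix i assume i: "i \<in> {..d}"
    show "grep (F i) * grep (G (d - i)) \<in> Mk n R w (Suc d)"
    proof (cases "i \<ge> NF")
      case True
      have "Suc i + (d - i) = Suc d" using i by simp
      then show ?thesis using Mk_mult[OF A_out[where F=F and i=i, OF NF[OF True]] A_mem[OF G], of "d - i"] by simp
    next
      case False
      then have "d - i \<ge> NG" using d by simp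
      moreover have "i + Suc (d - i) = Suc d" using i by simp
      ultimately show ?thesis using Mk_mult[OF A_mem[OF F] A_out[where F=G and i="d - i", OF NG], of i] by simp
    qed
  qed simp
  have "{d. gcos (Mk n R w) d (\<Sum>i\<le>d. grep (F i) * grep (G (d - i))) \<noteq> gcos (Mk n R w) d 0} \<subseteq> {..<NF + NG}"
  proof
    fix d assume d: "d \<in> {d. gcos (Mk n R w) d (\<Sum>i\<le>d. grep (F i) * grep (G (d - i))) \<noteq> gcos (Mk n R w) d 0}"
    show "d \<in> {..<NF + NG}"
    proof (rule ccontr)
      assume "d \<notin> {..<NF + NG}"
      then have "(\<Sum>i\<le>d. grep (F i) * grep (G (d - i))) - 0 \<in> Mk n R w (Suc d)" using out by simp
      then have "gcos (Mk n R w) d (\<Sum>i\<le>d. grep (F i) * grep (G (d - i))) = gcos (Mk n R w) d 0"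
        by (rule gcos_eqI)
      then show False using d by simp
    qed
  qed
  then have "finite {d. gcos (Mk n R w) d (\<Sum>i\<le>d. grep (F i) * grep (G (d - i))) \<noteq> gcos (Mk n R w) d 0}"
    by (rule finite_subset) simp
  then show ?thesis unfolding car_iff using inM by blast
qed




lemma double_sum_delta:
  fixes X :: "nat \<Rightarrow> nat \<Rightarrow> 'a::comm_monoid_add"
  assumes "d \<le> N"
  shows "(\<Sum>i\<le>N. \<Sum>j\<le>N. if d = i + j then X i j else 0) = (\<Sum>i\<le>d. X i (d - i))"
proof -
  have inner: "(\<Sum>j\<le>N. if d = i + j then X i j else 0) = (if i \<le> d then X i (d - i) else 0)" for i
  proof (cases "i \<le> d")
    case True
    have "(\<Sum>j\<le>N. if d = i + j then X i j else 0) = (\<Sum>j\<le>N. if j = d - i then X i j else 0)"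
      using True by (intro sum.cong) auto
    also have "\<dots> = X i (d - i)"
    proof -
      have "d - i \<in> {..N}" using assms by auto
      then show ?thesis by (simp add: sum.delta)
    qed
    finally show ?thesis using True by simp
  next
    case False
    then show ?thesis by (intro trans[OF sum.neutral]) auto
  qed
  have "(\<Sum>i\<le>N. \<Sum>j\<le>N. if d = i + j then X i j else 0) = (\<Sum>i\<le>N. if i \<le> d then X i (d - i) else 0)"
    using inner by simp
  also have "\<dots> = (\<Sum>i\<in>{i\<in>{..N}. i \<le> d}. X i (d - i))" by (rule sum.inter_filter[symmetric]) simp
  also have "{i\<in>{..N}. i \<le> d} = {..d}" using assms by auto
  finally show ?thesis .
qed

lemma mult_hom:
  fixes F G :: "nat \<Rightarrow> (nat, 'k::comm_ring_1) mpoly set"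
  assumes F: "F \<in> carrier (gr_ring (Mk n R w))" and G: "G \<in> carrier (gr_ring (Mk n R w))"
  shows "hmap n R w (F \<otimes>\<^bsub>gr_ring (Mk n R w)\<^esub> G) = hmap n R w F * hmap n R w G"
proof -
  let ?FG = "F \<otimes>\<^bsub>gr_ring (Mk n R w)\<^esub> G"
  have FGc: "?FG \<in> carrier (gr_ring (Mk n R w))" unfolding gr_mult_eq by (rule mult_car[OF F G])
  obtain NF where NF: "\<And>i. i \<ge> NF \<Longrightarrow> F i = gcos (Mk n R w) i 0" using bounded_supp[OF F] by blast
  obtain NG where NG: "\<And>i. i \<ge> NG \<Longrightarrow> G i = gcos (Mk n R w) i 0" using bounded_supp[OF G] by blast
  define p where "p i = proj n w i (grep (F i))" for i
  define q where "q i = proj n w i (grep (G i))" for i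
  show ?thesis
  proof (rule Mk_unique)
    show "hmap n R w ?FG \<in> Mk n R w 0" by (rule h_Mk0[OF FGc])
    show "hmap n R w F * hmap n R w G \<in> Mk n R w 0" using Mk_mult[OF h_Mk0[OF F] h_Mk0[OF G]] by simp
    fix d
    have "proj n w d (hmap n R w ?FG) = proj n w d (grep (?FG d))" by (rule h_proj[OF FGc])
    also have "\<dots> = proj n w d (\<Sum>i\<le>d. grep (F i) * grep (G (d - i)))"
      unfolding gr_mult_eq by (rule proj_grep_gcos)
    also have "\<dots> = (\<Sum>i\<le>d. p i * q (d - i))"
      unfolding proj_sum[OF finite_atMost] p_def q_def
    proof (rule sum.cong[OF refl])
      fix i assume "i \<in> {..d}"
      then have "i + (d - i) = d" by simp
      then show "proj n w d (grep (F i) * grep (G (d - i))) = proj n w i (grep (F i)) * proj n w (d - i) (grep (G (d - i)))"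
        using proj_mult[OF A_mem[OF F] A_mem[OF G], of i "d - i"] by simp
    qed
    finally have lhs: "proj n w d (hmap n R w ?FG) = (\<Sum>i\<le>d. p i * q (d - i))" .
    define N where "N = NF + NG + d"
    have hF: "hmap n R w F = (\<Sum>i\<le>N. p i)" unfolding p_def
    proof (rule h_T[OF F])
      show "{i. F i \<noteq> gcos (Mk n R w) i 0} \<subseteq> {..N}" using NF unfolding N_def by (force simp: not_le)
    qed simp
    have hG: "hmap n R w G = (\<Sum>j\<le>N. q j)" unfolding q_def
    proof (rule h_T[OF G])
      show "{i. G i \<noteq> gcos (Mk n R w) i 0} \<subseteq> {..N}" using NG unfolding N_def by (force simp: not_le)
    qed simp
    have hpq: "proj n w d (p i * q j) = (if d = i + j then p i * q j else 0)" for i j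
    proof -
      have "homog n w (i + j) (p i * q j)" unfolding p_def q_def by (intro homog_mult homog_proj)
      then show ?thesis by (rule proj_homog)
    qed
    have "proj n w d (hmap n R w F * hmap n R w G) = proj n w d (\<Sum>i\<le>N. \<Sum>j\<le>N. p i * q j)"
      unfolding hF hG sum_product ..
    also have "\<dots> = (\<Sum>i\<le>N. \<Sum>j\<le>N. if d = i + j then p i * q j else 0)"
      by (simp add: proj_sum hpq)
    also have "\<dots> = (\<Sum>i\<le>d. p i * q (d - i))"
      by (rule double_sum_delta) (simp add: N_def)
    finally show "proj n w d (hmap n R w ?FG) = proj n w d (hmap n R w F * hmap n R w G)"
      using lhs by simp
  qed
qed

lemma add_car:
  fixes F G :: "nat \<Rightarrow> (nat, 'k::comm_ring_1) mpoly set"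
  assumes F: "F \<in> carrier (gr_ring (Mk n R w))" and G: "G \<in> carrier (gr_ring (Mk n R w))"
  shows "(F \<oplus>\<^bsub>gr_ring (Mk n R w)\<^esub> G) \<in> carrier (gr_ring (Mk n R w))"
  unfolding gr_add_eq car_iff
proof (intro conjI allI)
  fix i
  show "\<exists>a\<in>Mk n R w i. gcos (Mk n R w) i (grep (F i) + grep (G i)) = gcos (Mk n R w) i a"
    using Mk_add[OF A_mem[OF F] A_mem[OF G]] by blast
next
  have "{i. gcos (Mk n R w) i (grep (F i) + grep (G i)) \<noteq> gcos (Mk n R w) i 0}
      \<subseteq> {i. F i \<noteq> gcos (Mk n R w) i 0} \<union> {i. G i \<noteq> gcos (Mk n R w) i 0}"
  proof
    fix i assume i: "i \<in> {i. gcos (Mk n R w) i (grep (F i) + grep (G i)) \<noteq> gcos (Mk n R w) i 0}"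
    show "i \<in> {i. F i \<noteq> gcos (Mk n R w) i 0} \<union> {i. G i \<noteq> gcos (Mk n R w) i 0}"
    proof (rule ccontr)
      assume "i \<notin> {i. F i \<noteq> gcos (Mk n R w) i 0} \<union> {i. G i \<noteq> gcos (Mk n R w) i 0}"
      then have "F i = gcos (Mk n R w) i 0" "G i = gcos (Mk n R w) i 0" by auto
      then have "grep (F i) + grep (G i) - 0 \<in> Mk n R w (Suc i)"
        using Mk_add[OF A_out[where F=F] A_out[where F=G]] by simp
      then have "gcos (Mk n R w) i (grep (F i) + grep (G i)) = gcos (Mk n R w) i 0" by (rule gcos_eqI)
      then show False using i by simp
    qed
  qed
  moreover have "finite ({i. F i \<noteq> gcos (Mk n R w) i 0} \<union> {i. G i \<noteq> gcos (Mk n R w) i 0})"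
    using F G unfolding car_iff by blast
  ultimately show "finite {i. gcos (Mk n R w) i (grep (F i) + grep (G i)) \<noteq> gcos (Mk n R w) i 0}"
    by (rule finite_subset)
qed

lemma add_hom:
  fixes F G :: "nat \<Rightarrow> (nat, 'k::comm_ring_1) mpoly set"
  assumes F: "F \<in> carrier (gr_ring (Mk n R w))" and G: "G \<in> carrier (gr_ring (Mk n R w))"
  shows "hmap n R w (F \<oplus>\<^bsub>gr_ring (Mk n R w)\<^esub> G) = hmap n R w F + hmap n R w G"
proof (rule Mk_unique)
  have c: "(F \<oplus>\<^bsub>gr_ring (Mk n R w)\<^esub> G) \<in> carrier (gr_ring (Mk n R w))" by (rule add_car[OF F G])
  show "hmap n R w (F \<oplus>\<^bsub>gr_ring (Mk n R w)\<^esub> G) \<in> Mk n R w 0" by (rule h_Mk0[OF c])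
  show "hmap n R w F + hmap n R w G \<in> Mk n R w 0" by (rule Mk_add[OF h_Mk0[OF F] h_Mk0[OF G]])
  fix d
  show "proj n w d (hmap n R w (F \<oplus>\<^bsub>gr_ring (Mk n R w)\<^esub> G)) = proj n w d (hmap n R w F + hmap n R w G)"
    unfolding h_proj[OF c] proj_add h_proj[OF F] h_proj[OF G]
    unfolding gr_add_eq proj_grep_gcos proj_add ..
qed

lemma pconst_Mk0: "pconst (c::'k::comm_ring_1) \<in> Mk n R w 0"
  unfolding pconst_def Mk_def by simp

lemma homog_pconst: "homog n w 0 (pconst (c::'k::comm_ring_1))"
  unfolding homog_def pconst_def by (simp split: if_splits)

lemma const_car: "gr_const (Mk n R w) (c::'k::comm_ring_1) \<in> carrier (gr_ring (Mk n R w))"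
  unfolding car_iff gr_const_def
proof (intro conjI allI)
  fix i
  show "\<exists>a\<in>Mk n R w i. gcos (Mk n R w) i (if i = 0 then pconst c else 0) = gcos (Mk n R w) i a"
    using pconst_Mk0 by (intro bexI[of _ "if i = 0 then pconst c else 0"]) auto
  have "{i. gcos (Mk n R w) i (if i = 0 then pconst c else 0) \<noteq> gcos (Mk n R w) i 0} \<subseteq> {0}" by auto
  then show "finite {i. gcos (Mk n R w) i (if i = 0 then pconst c else 0) \<noteq> gcos (Mk n R w) i 0}"
    by (rule finite_subset) simp
qed

lemma const_hom: "hmap n R w (gr_const (Mk n R w) (c::'k::comm_ring_1)) = pconst c"
proof (rule Mk_unique)
  show "hmap n R w (gr_const (Mk n R w) c) \<in> Mk n R w 0" by (rule h_Mk0[OF const_car])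
  show "pconst c \<in> Mk n R w 0" by (rule pconst_Mk0)
  fix d
  show "proj n w d (hmap n R w (gr_const (Mk n R w) c)) = proj n w d (pconst c)"
    unfolding h_proj[OF const_car] unfolding gr_const_def proj_grep_gcos
    by (simp add: proj_homog[OF homog_pconst])
qed

lemma h_inj:
  fixes F G :: "nat \<Rightarrow> (nat, 'k::comm_ring_1) mpoly set"
  assumes F: "F \<in> carrier (gr_ring (Mk n R w))" and G: "G \<in> carrier (gr_ring (Mk n R w))"
    and e: "hmap n R w F = hmap n R w G"
  shows "F = G"
proof
  fix i
  have "proj n w i (grep (F i)) = proj n w i (grep (G i))" using h_proj[OF F, of i] h_proj[OF G, of i] e by simp
  then have "proj n w i (grep (F i) - grep (G i)) = 0" by (simp add: proj_diff)
  then have "grep (F i) - grep (G i) \<in> Mk n R w (Suc i)"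
    by (intro Mk_proj_zero Mk_diff A_mem F G)
  then have "gcos (Mk n R w) i (grep (F i)) = gcos (Mk n R w) i (grep (G i))" by (rule gcos_eqI)
  then show "F i = G i" using A_eq[OF F, of i] A_eq[OF G, of i] by simp
qed

lemma h_surj:
  fixes p :: "(nat, 'k::comm_ring_1) mpoly"
  assumes p: "p \<in> Mk n R w 0"
  shows "\<exists>F\<in>carrier (gr_ring (Mk n R w)). hmap n R w F = p"
proof -
  define F where "F d = gcos (Mk n R w) d (proj n w d p)" for d
  have Fc: "F \<in> carrier (gr_ring (Mk n R w))" unfolding car_iff
  proof (intro conjI allI)
    fix i show "\<exists>a\<in>Mk n R w i. F i = gcos (Mk n R w) i a" unfolding F_def using proj_in_Mk[OF p] by blast
    have "{i. F i \<noteq> gcos (Mk n R w) i 0} \<subseteq> (\<lambda>f. nat (Lw n w f)) ` Poly_Mapping.keys p"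
    proof
      fix d assume d: "d \<in> {i. F i \<noteq> gcos (Mk n R w) i 0}"
      then have "proj n w d p \<noteq> 0" unfolding F_def by auto
      then obtain f where "Poly_Mapping.lookup (proj n w d p) f \<noteq> 0" by (metis poly_mapping_eqI lookup_zero)
      then have "Lw n w f = int d" "f \<in> Poly_Mapping.keys p" by (auto simp: lookup_proj in_keys_iff split: if_splits)
      then show "d \<in> (\<lambda>f. nat (Lw n w f)) ` Poly_Mapping.keys p" by force
    qed
    then show "finite {i. F i \<noteq> gcos (Mk n R w) i 0}" by (rule finite_subset) simp
  qed
  have "hmap n R w F = p"
  proof (rule Mk_unique[OF h_Mk0[OF Fc] p])
    fix d show "proj n w d (hmap n R w F) = proj n w d p"
      unfolding h_proj[OF Fc] F_def proj_grep_gcos proj_proj by simp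
  qed
  then show ?thesis using Fc by blast
qed




lemma gr_iso:
  assumes po: "partial_order_on {1..n} R" and c3: "cond3 n R"
  shows "gr_iso_R_P n R TYPE('k::comm_ring_1)"
proof -
  obtain w where wp: "wprop n R w" using w_exists[OF po] by blast
  have mpf: "(mpow n R :: nat \<Rightarrow> (nat, 'k) mpoly set) = Mk n R w"
    by (rule ext) (rule mpow_eq[OF po wp c3])
  have RP: "(R_P n R :: (nat, 'k) mpoly set) = Mk n R w 0"
    using fun_cong[OF mpf, of 0] by simp
  let ?G = "gr_ring (Mk n R w) :: (nat \<Rightarrow> (nat, 'k) mpoly set) ring"
  let ?h = "hmap n R w :: (nat \<Rightarrow> (nat, 'k) mpoly set) \<Rightarrow> (nat, 'k) mpoly"
  have carR: "carrier (R_P_ring n R :: (nat, 'k) mpoly ring) = Mk n R w 0"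
    unfolding R_P_ring_def RP by simp
  have hom: "?h \<in> ring_hom ?G (R_P_ring n R)"
    unfolding ring_hom_def
  proof (intro CollectI conjI allI impI)
    show "?h \<in> carrier ?G \<rightarrow> carrier (R_P_ring n R)" unfolding carR
    proof
      fix F assume "F \<in> carrier ?G" then show "?h F \<in> Mk n R w 0" by (rule h_Mk0)
    qed
    fix x y assume xy: "x \<in> carrier ?G \<and> y \<in> carrier ?G"
    show "?h (x \<otimes>\<^bsub>?G\<^esub> y) = ?h x \<otimes>\<^bsub>R_P_ring n R\<^esub> ?h y"
      using mult_hom[of x n R w y] xy unfolding R_P_ring_def by simp
    show "?h (x \<oplus>\<^bsub>?G\<^esub> y) = ?h x \<oplus>\<^bsub>R_P_ring n R\<^esub> ?h y"
      using add_hom[of x n R w y] xy unfolding R_P_ring_def by simp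
  next
    show "?h \<one>\<^bsub>?G\<^esub> = \<one>\<^bsub>R_P_ring n R\<^esub>"
      unfolding gr_one_eq const_hom R_P_ring_def pconst_def by simp
  qed
  have bij: "bij_betw ?h (carrier ?G) (carrier (R_P_ring n R))"
    unfolding bij_betw_def carR
  proof
    show "inj_on ?h (carrier ?G)"
    proof (rule inj_onI)
      fix F G assume "F \<in> carrier ?G" "G \<in> carrier ?G" "?h F = ?h G"
      then show "F = G" by (rule h_inj)
    qed
    show "?h ` carrier ?G = Mk n R w 0"
    proof
      show "?h ` carrier ?G \<subseteq> Mk n R w 0"
      proof
        fix p assume "p \<in> ?h ` carrier ?G"
        then obtain F where "F \<in> carrier ?G" "p = ?h F" by blast
        then show "p \<in> Mk n R w 0" using h_Mk0 by simp
      qed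
      show "Mk n R w 0 \<subseteq> ?h ` carrier ?G"
      proof
        fix p :: "(nat, 'k) mpoly" assume "p \<in> Mk n R w 0"
        then obtain F where "F \<in> carrier ?G" "?h F = p" using h_surj by blast
        then show "p \<in> ?h ` carrier ?G" by blast
      qed
    qed
  qed
  have "?h \<in> ring_iso (grR_P n R) (R_P_ring n R)"
    unfolding grR_P_def mpf ring_iso_def using hom bij by simp
  moreover have "\<forall>c::'k. ?h (gr_const (mpow n R) c) = pconst c" unfolding mpf by (intro allI) (rule const_hom)
  ultimately show ?thesis unfolding gr_iso_R_P_def by (intro exI[of _ ?h] conjI)
qed

lemma cond3_iff:
  "cond3 n R \<longleftrightarrow> (\<forall>J1 J2. {J1, J2} \<in> Pi_pairs n R \<longrightarrow> hasse_connected R (J1 \<inter> J2))"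
proof
  assume c: "cond3 n R"
  show "\<forall>J1 J2. {J1, J2} \<in> Pi_pairs n R \<longrightarrow> hasse_connected R (J1 \<inter> J2)"
  proof (intro allI impI)
    fix J1 J2 assume "{J1, J2} \<in> Pi_pairs n R"
    then obtain A C where AC: "{J1, J2} = {A, C}" "A \<in> J_conn n R" "C \<in> J_conn n R" "intersect_nontrivially A C"
      unfolding Pi_pairs_def by auto
    have "hasse_connected R (A \<inter> C)"
      using c[unfolded cond3_def, rule_format, OF conjI[OF AC(2) conjI[OF AC(3) AC(4)]]] .
    moreover have "J1 \<inter> J2 = A \<inter> C"
    proof -
      have "(J1 = A \<and> J2 = C) \<or> (J1 = C \<and> J2 = A)" using AC(1) by (simp add: doubleton_eq_iff)
      then show ?thesis by auto
    qed
    ultimately show "hasse_connected R (J1 \<inter> J2)" by simp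
  qed
next
  assume h: "\<forall>J1 J2. {J1, J2} \<in> Pi_pairs n R \<longrightarrow> hasse_connected R (J1 \<inter> J2)"
  show "cond3 n R" unfolding cond3_def
  proof (intro allI impI)
    fix A C assume "A \<in> J_conn n R \<and> C \<in> J_conn n R \<and> intersect_nontrivially A C"
    then have "{A, C} \<in> Pi_pairs n R" unfolding Pi_pairs_def by auto
    then show "hasse_connected R (A \<inter> C)" using h by simp
  qed
qed

theorem corollary6p5:
  fixes n :: nat and R :: "nat rel"
  assumes "partial_order_on {1..n} R"
  shows "(((I_gr_P n R :: (nat set, 'k::field) mpoly set) = I_P n R \<and> gr_iso_R_P n R TYPE('k))
            \<longleftrightarrow> homogeneous_ideal (I_P n R :: (nat set, 'k) mpoly set))
       \<and> (homogeneous_ideal (I_P n R :: (nat set, 'k) mpoly set)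
            \<longleftrightarrow> (\<forall>J1 J2. {J1, J2} \<in> Pi_pairs n R \<longrightarrow> hasse_connected R (J1 \<inter> J2)))"
proof -
  have po: "partial_order_on {1..n} R" by (rule assms)
  have B: "homogeneous_ideal (I_P n R :: (nat set, 'k) mpoly set) \<longleftrightarrow> cond3 n R"
    using homog_cond3[OF po] cond3_homog[OF po] by blast
  have A: "((I_gr_P n R :: (nat set, 'k) mpoly set) = I_P n R \<and> gr_iso_R_P n R TYPE('k))
            \<longleftrightarrow> homogeneous_ideal (I_P n R :: (nat set, 'k) mpoly set)"
  proof
    assume "(I_gr_P n R :: (nat set, 'k) mpoly set) = I_P n R \<and> gr_iso_R_P n R TYPE('k)"
    then show "homogeneous_ideal (I_P n R :: (nat set, 'k) mpoly set)"
      using I_gr_homogeneous[where 'k='k, of n R] by simp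
  next
    assume "homogeneous_ideal (I_P n R :: (nat set, 'k) mpoly set)"
    then have c3: "cond3 n R" using B by simp
    show "(I_gr_P n R :: (nat set, 'k) mpoly set) = I_P n R \<and> gr_iso_R_P n R TYPE('k)"
      using I_gr_eq[OF po c3] gr_iso[OF po c3] by simp
  qed
  show ?thesis using A B cond3_iff by simp
qed



end
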